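(* Let $\mathcal S$ and $\mathcal A$ be compact. Let $\pi^m_\theta(a|s)=\sum_{k=1}^N\pi^w_\theta(k|s)\pi^c_\theta(a|s,k)$ be a mixture policy whose components are reparameterized: for $\epsilon\sim p(\cdot)$, $f_\theta(\epsilon;s,k)\sim\pi^c_\theta(\cdot|s,k)$, with $f_\theta(\cdot;s,k)$ invertible with inverse $f^{-1}_\theta(a;s,k)$. Assume $p(s'|s,a)$, $d_0(s)$, $r(s,a)$, $f_\theta(\epsilon;s,k)$, $f^{-1}_\theta(a;s,k)$, $\pi^w_\theta(k|s)$, $\pi^c_\theta(a|s,k)$, $p(\epsilon)$ and their derivatives are continuous in $s,a,s',\theta,\epsilon$, and that $Q_\phi(s,a)$ and its derivatives are continuous in $s$ and $a$. Define $\hat J(\pi^m_\theta)=\mathbb{E}_{s\sim\mathcal B,\,a\sim\pi^m_\theta(\cdot|s)}[Q_\phi(s,a)-\alpha\log\pi^m_\theta(a|s)]$. Then $$\nabla_\theta\hat J(\pi^m_\theta)=\mathbb{E}_{s\sim\mathcal B,\,k\sim\pi^w_\theta(\cdot|s),\,\epsilon\sim p}\Big[\nabla_\theta\log\pi^w_\theta(k|s)\big(Q_\phi(s,f_\theta(\epsilon;s,k))-\alpha\log\pi^m_\theta(f_\theta(\epsilon;s,k)|s)\big)+\nabla_\theta\big(Q_\phi(s,f_\theta(\epsilon;s,k))-\alpha\log\pi^m_\theta(f_\theta(\epsilon;s,k)|s)\big)\Big].$$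
   Context: $Q_\phi:\mathcal S\times\mathcal A\to\mathbb{R}$ is a fixed (learned) action-value estimate not depending on $\theta$; $\mathcal B$ is a fixed distribution over states (e.g. the state distribution of a replay buffer); $\alpha>0$. $\pi^w_\theta(\cdot|s)$ is a distribution on $\{1,\dots,N\}$. In the second term, $\nabla_\theta$ differentiates through $f_\theta$ and $\pi^m_\theta$. *)

theory Defs
  imports "HOL-Probability.Probability"
begin

definition C1_fun :: "('a::real_normed_vector \<Rightarrow> 'b::real_normed_vector) \<Rightarrow> bool" where
  "C1_fun g \<longleftrightarrow> (\<exists>g'. (\<forall>x. (g has_derivative blinfun_apply (g' x)) (at x)) \<and> continuous_on UNIV g')"

definition grad :: "('a::euclidean_space \<Rightarrow> real) \<Rightarrow> 'a \<Rightarrow> 'a" where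
  "grad g x = (\<Sum>b\<in>Basis. frechet_derivative g (at x) b *\<^sub>R b)"

definition has_gradient_at :: "('a::euclidean_space \<Rightarrow> real) \<Rightarrow> 'a \<Rightarrow> 'a \<Rightarrow> bool" where
  "has_gradient_at g v x \<longleftrightarrow> (g has_derivative (\<lambda>h. v \<bullet> h)) (at x)"

definition mixture_policy ::
  "nat \<Rightarrow> ('p \<Rightarrow> 's \<Rightarrow> nat \<Rightarrow> real) \<Rightarrow> ('p \<Rightarrow> 's \<Rightarrow> nat \<Rightarrow> 'a \<Rightarrow> real) \<Rightarrow> 'p \<Rightarrow> 's \<Rightarrow> 'a \<Rightarrow> real" where
  "mixture_policy N piw pic \<theta> s a = (\<Sum>k=1..N. piw \<theta> s k * pic \<theta> s k a)"

definition Jhat ::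
  "'s measure \<Rightarrow> 'a::euclidean_space set \<Rightarrow> ('s \<Rightarrow> 'a \<Rightarrow> real) \<Rightarrow> real \<Rightarrow> ('p \<Rightarrow> 's \<Rightarrow> 'a \<Rightarrow> real) \<Rightarrow> 'p \<Rightarrow> real" where
  "Jhat B A Q \<alpha> pim \<theta> = (LINT s|B. (LINT a:A|lborel. pim \<theta> s a * (Q s a - \<alpha> * ln (pim \<theta> s a))))"

end

theory Submission
  imports Defs
begin

definition C1_on :: "'a::real_normed_vector set \<Rightarrow> ('a \<Rightarrow> 'b::real_normed_vector) \<Rightarrow> bool" where
  "C1_on U g \<longleftrightarrow> (\<exists>g'. (\<forall>x\<in>U. (g has_derivative g' x) (at x)) \<and> (\<forall>v. continuous_on U (\<lambda>x. g' x v)))"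

lemma C1_on_cont: "C1_on U g \<Longrightarrow> continuous_on U g"
  unfolding C1_on_def
  by (meson continuous_at_imp_continuous_on has_derivative_continuous)

lemma C1_on_subset: "C1_on U g \<Longrightarrow> V \<subseteq> U \<Longrightarrow> C1_on V g"
  unfolding C1_on_def by (meson continuous_on_subset subsetD)

lemma C1_fun_C1_on: "C1_fun g \<Longrightarrow> C1_on U g"
  unfolding C1_fun_def C1_on_def
proof (elim exE conjE)
  fix g' assume d: "\<forall>x. (g has_derivative blinfun_apply (g' x)) (at x)" and c: "continuous_on UNIV g'"
  show "\<exists>g'. (\<forall>x\<in>U. (g has_derivative g' x) (at x)) \<and> (\<forall>v. continuous_on U (\<lambda>x. g' x v))"
    apply (rule exI[of _ "\<lambda>x. blinfun_apply (g' x)"])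
    using d continuous_on_subset[OF c] by (auto intro!: blinfun.continuous_on continuous_on_const)
qed

lemma C1_on_linear: "bounded_linear L \<Longrightarrow> C1_on U L"
  unfolding C1_on_def
  by (rule exI[of _ "\<lambda>x. L"]) (auto intro: bounded_linear_imp_has_derivative)

lemma C1_on_const: "C1_on U (\<lambda>x. c)"
  unfolding C1_on_def
  by (rule exI[of _ "\<lambda>x v. 0"]) auto

lemma C1_on_add: "C1_on U f \<Longrightarrow> C1_on U g \<Longrightarrow> C1_on U (\<lambda>x. f x + g x)"
  unfolding C1_on_def
  apply (elim exE conjE)
  subgoal for f' g'
    by (rule exI[of _ "\<lambda>x v. f' x v + g' x v"]) (auto intro!: has_derivative_add continuous_on_add)
  done

lemma C1_on_diff: "C1_on U f \<Longrightarrow> C1_on U g \<Longrightarrow> C1_on U (\<lambda>x. f x - g x)"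
  unfolding C1_on_def
  apply (elim exE conjE)
  subgoal for f' g'
    by (rule exI[of _ "\<lambda>x v. f' x v - g' x v"]) (auto intro!: has_derivative_diff continuous_on_diff)
  done

lemma C1_on_mult:
  fixes f g :: "'a::real_normed_vector \<Rightarrow> real"
  shows "C1_on U f \<Longrightarrow> C1_on U g \<Longrightarrow> C1_on U (\<lambda>x. f x * g x)"
proof -
  assume F: "C1_on U f" and G: "C1_on U g"
  have cf: "continuous_on U f" and cg: "continuous_on U g" using F G C1_on_cont by auto
  from F G show ?thesis
  unfolding C1_on_def
  apply (elim exE conjE)
  subgoal for f' g'
    apply (rule exI[of _ "\<lambda>x v. f x * g' x v + f' x v * g x"])
    using cf cg by (auto intro!: has_derivative_mult continuous_on_add continuous_on_mult)
  done
qed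

lemma C1_on_sum: "finite I \<Longrightarrow> (\<And>i. i \<in> I \<Longrightarrow> C1_on U (f i)) \<Longrightarrow> C1_on U (\<lambda>x. \<Sum>i\<in>I. f i x)"
  by (induction I rule: finite_induct) (auto intro: C1_on_add C1_on_const)

lemma C1_on_pair: "C1_on U f \<Longrightarrow> C1_on U g \<Longrightarrow> C1_on U (\<lambda>x. (f x, g x))"
  unfolding C1_on_def
  apply (elim exE conjE)
  subgoal for f' g'
    by (rule exI[of _ "\<lambda>x v. (f' x v, g' x v)"]) (auto intro!: has_derivative_Pair continuous_on_Pair)
  done

lemma C1_on_compose: "C1_fun F \<Longrightarrow> C1_on U g \<Longrightarrow> C1_on U (\<lambda>x. F (g x))"
proof -
  assume F: "C1_fun F" and G: "C1_on U g"
  have cg: "continuous_on U g" using G C1_on_cont by auto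
  from F obtain F' where dF: "\<forall>x. (F has_derivative blinfun_apply (F' x)) (at x)" and cF: "continuous_on UNIV F'"
    unfolding C1_fun_def by blast
  from G show ?thesis
  unfolding C1_on_def
  apply (elim exE conjE)
  subgoal for g'
    apply (rule exI[of _ "\<lambda>x v. blinfun_apply (F' (g x)) (g' x v)"])
    apply safe
    subgoal for x using diff_chain_at[of g "g' x" x F "blinfun_apply (F' (g x))"] dF by (simp add: o_def)
    subgoal for v apply (rule blinfun.continuous_on)
       apply (rule continuous_on_compose2[OF cF cg]) by auto
    done
  done
qed

lemma C1_on_ln:
  fixes g :: "'a::real_normed_vector \<Rightarrow> real"
  assumes G: "C1_on U g" and nz: "\<And>x. x \<in> U \<Longrightarrow> g x \<noteq> 0"
  shows "C1_on U (\<lambda>x. ln (g x))"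
proof -
  have cg: "continuous_on U g" using G C1_on_cont by auto
  have dln: "(ln has_real_derivative inverse y) (at y)" if "y \<noteq> 0" for y :: real
  proof (cases "y > 0")
    case True then show ?thesis using DERIV_ln[of y] by (simp add: divide_inverse)
  next
    case False
    then have y: "y < 0" using that by auto
    have "((\<lambda>z. ln (- z)) has_real_derivative inverse (- y) * (- 1)) (at y)"
      using y by (auto intro!: derivative_eq_intros simp: divide_inverse)
    moreover have "\<forall>\<^sub>F z in nhds y. ln (- z) = ln z"
    proof -
      have "\<forall>\<^sub>F z in nhds y. z < 0" using eventually_nhds_in_open[of "{..<(0::real)}" y] y by simp
      then show ?thesis by eventually_elim (simp add: ln_real_def)
    qed
    ultimately show ?thesis
      by (subst (asm) DERIV_cong_ev[OF refl _ refl]) (auto simp: inverse_eq_divide)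
  qed
  from G show ?thesis
  unfolding C1_on_def
  apply (elim exE conjE)
  subgoal for g'
    apply (rule exI[of _ "\<lambda>x v. inverse (g x) * g' x v"])
    apply safe
    subgoal for x
    proof -
      assume xU: "x \<in> U" and dg: "\<forall>x\<in>U. (g has_derivative g' x) (at x)"
      have "(ln has_derivative (\<lambda>h. inverse (g x) * h)) (at (g x))"
        using dln[of "g x"] nz[OF xU] by (simp add: has_field_derivative_def)
      from diff_chain_at[OF dg[rule_format, OF xU] this] show ?thesis by (simp add: o_def)
    qed
    subgoal for v using nz by (auto intro!: continuous_on_mult continuous_on_inverse cg)
    done
  done
qed

lemma C1_on_partial_grad:
  fixes \<Phi> :: "'p::euclidean_space \<times> 'y::real_normed_vector \<Rightarrow> real"
  assumes "C1_on U \<Phi>"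
  shows "\<exists>D. continuous_on U D \<and> (\<forall>\<theta> y. (\<theta>, y) \<in> U \<longrightarrow> ((\<lambda>t. \<Phi> (t, y)) has_derivative (\<lambda>h. D (\<theta>, y) \<bullet> h)) (at \<theta>))"
proof -
  from assms obtain \<Phi>' where d: "\<forall>x\<in>U. (\<Phi> has_derivative \<Phi>' x) (at x)"
    and c: "\<forall>v. continuous_on U (\<lambda>x. \<Phi>' x v)" unfolding C1_on_def by blast
  define D where "D x = (\<Sum>b\<in>Basis. \<Phi>' x (b, 0) *\<^sub>R b)" for x
  have "continuous_on U D" unfolding D_def using c by (auto intro!: continuous_intros)
  moreover have "((\<lambda>t. \<Phi> (t, y)) has_derivative (\<lambda>h. D (\<theta>, y) \<bullet> h)) (at \<theta>)" if xU: "(\<theta>, y) \<in> U" for \<theta> y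
  proof -
    have p: "((\<lambda>t. (t, y)) has_derivative (\<lambda>h. (h, 0))) (at \<theta>)"
      by (auto intro!: derivative_eq_intros)
    have ch: "((\<lambda>t. \<Phi> (t, y)) has_derivative (\<lambda>h. \<Phi>' (\<theta>, y) (h, 0))) (at \<theta>)"
      using diff_chain_at[OF p, of \<Phi> "\<Phi>' (\<theta>, y)"] d xU by (simp add: o_def)
    have lin: "linear (\<lambda>h. \<Phi>' (\<theta>, y) (h, 0))"
      using ch has_derivative_linear by blast
    have "\<Phi>' (\<theta>, y) (h, 0) = D (\<theta>, y) \<bullet> h" for h
      using Linear_Algebra.linear_componentwise[OF lin, of h 1]
      by (auto simp: D_def inner_sum_right inner_commute intro!: sum.cong)
    then show ?thesis using ch by simp
  qed
  ultimately show ?thesis by blast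
qed

lemma grad_eq: "(g has_derivative (\<lambda>h. v \<bullet> h)) (at x) \<Longrightarrow> grad g x = v"
  unfolding grad_def
  by (metis (no_types, lifting) euclidean_representation frechet_derivative_at inner_commute sum.cong)

lemma onorm_inner_diff:
  fixes u w :: "'p::euclidean_space"
  shows "onorm ((\<lambda>h. u \<bullet> h) - (\<lambda>h. w \<bullet> h)) \<le> norm (u - w)"
proof -
  have "((\<lambda>h. u \<bullet> h) - (\<lambda>h. w \<bullet> h)) = (\<lambda>h. (u - w) \<bullet> h)"
    by (auto simp: fun_eq_iff inner_diff_left)
  moreover have "onorm (\<lambda>h. (u - w) \<bullet> h) \<le> norm (u - w)"
    by (rule onorm_bound) (auto simp: Cauchy_Schwarz_ineq2)
  ultimately show ?thesis by simp
qed

lemma diff_under_integral: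
  fixes F :: "'p::euclidean_space \<Rightarrow> 'x \<Rightarrow> real" and D :: "'p \<Rightarrow> 'x \<Rightarrow> 'p"
  assumes int: "\<And>\<theta>. integrable M (F \<theta>)"
    and intD: "integrable M (D \<theta>0)"
    and deriv: "AE x in M. \<forall>\<theta>. ((\<lambda>t. F t x) has_derivative (\<lambda>h. D \<theta> x \<bullet> h)) (at \<theta>)"
    and g: "integrable M g"
    and unif: "\<And>e. e > 0 \<Longrightarrow> \<exists>d>0. AE x in M. \<forall>\<theta>. dist \<theta> \<theta>0 < d \<longrightarrow> norm (D \<theta> x - D \<theta>0 x) \<le> e * g x"
  shows "((\<lambda>\<theta>. LINT x|M. F \<theta> x) has_derivative (\<lambda>h. (LINT x|M. D \<theta>0 x) \<bullet> h)) (at \<theta>0)"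
  unfolding has_derivative_at_alt
proof (intro conjI allI impI)
  show "bounded_linear (\<lambda>h. (LINT x|M. D \<theta>0 x) \<bullet> h)" by (rule bounded_linear_inner_right)
  fix e :: real assume e: "e > 0"
  define I where "I = \<bar>LINT x|M. g x\<bar>"
  define e' where "e' = e / (I + 1)"
  have I0: "I \<ge> 0" unfolding I_def by simp
  have e': "e' > 0" unfolding e'_def using e I0 by auto
  obtain d where d: "d > 0" and dd: "AE x in M. \<forall>\<theta>. dist \<theta> \<theta>0 < d \<longrightarrow> norm (D \<theta> x - D \<theta>0 x) \<le> e' * g x"
    using unif[OF e'] by blast
  show "\<exists>d>0. \<forall>y. norm (y - \<theta>0) < d \<longrightarrow>
      norm ((LINT x|M. F y x) - (LINT x|M. F \<theta>0 x) - (LINT x|M. D \<theta>0 x) \<bullet> (y - \<theta>0)) \<le> e * norm (y - \<theta>0)"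
  proof (intro exI[of _ d] conjI allI impI d)
    fix y assume y: "norm (y - \<theta>0) < d"
    have bnd: "AE x in M. norm (F y x - F \<theta>0 x - D \<theta>0 x \<bullet> (y - \<theta>0)) \<le> norm (y - \<theta>0) * (e' * g x)"
      using deriv dd
    proof eventually_elim
      case (elim x)
      show ?case
      proof (rule differentiable_bound_linearization[where S="ball \<theta>0 d" and f="\<lambda>t. F t x" and f'="\<lambda>t h. D t x \<bullet> h"])
        fix t :: real assume "t \<in> {0..1}"
        then have "norm (t *\<^sub>R (y - \<theta>0)) < d" using y d
          by (auto intro: le_less_trans[OF mult_left_le_one_le])
        then show "\<theta>0 + t *\<^sub>R (y - \<theta>0) \<in> ball \<theta>0 d" by (simp add: dist_norm)
      next
        fix z assume "z \<in> ball \<theta>0 d"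
        show "((\<lambda>t. F t x) has_derivative (\<lambda>h. D z x \<bullet> h)) (at z within ball \<theta>0 d)"
          using elim(1) has_derivative_at_withinI by blast
      next
        fix z assume "z \<in> ball \<theta>0 d"
        then have "norm (D z x - D \<theta>0 x) \<le> e' * g x" using elim(2) by (simp add: dist_commute)
        then show "onorm ((\<lambda>h. D z x \<bullet> h) - (\<lambda>h. D \<theta>0 x \<bullet> h)) \<le> e' * g x"
          using onorm_inner_diff order_trans by blast
      qed (use d in auto)
    qed
    have i1: "integrable M (\<lambda>x. F y x - F \<theta>0 x - D \<theta>0 x \<bullet> (y - \<theta>0))"
      using Bochner_Integration.integrable_diff[OF Bochner_Integration.integrable_diff[OF int[of y] int[of \<theta>0]] integrable_inner_left[OF intD, of "y - \<theta>0"]] by simp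
    have "(LINT x|M. F y x) - (LINT x|M. F \<theta>0 x) - (LINT x|M. D \<theta>0 x) \<bullet> (y - \<theta>0)
        = (LINT x|M. F y x - F \<theta>0 x - D \<theta>0 x \<bullet> (y - \<theta>0))"
      using int intD by (simp add: integral_diff integrable_inner_left)
    then have "norm ((LINT x|M. F y x) - (LINT x|M. F \<theta>0 x) - (LINT x|M. D \<theta>0 x) \<bullet> (y - \<theta>0))
        \<le> (LINT x|M. norm (F y x - F \<theta>0 x - D \<theta>0 x \<bullet> (y - \<theta>0)))"
      using integral_norm_bound by metis
    also have "\<dots> \<le> (LINT x|M. norm (y - \<theta>0) * (e' * g x))"
      using bnd i1 g by (intro integral_mono_AE) auto
    also have "\<dots> = norm (y - \<theta>0) * e' * (LINT x|M. g x)"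
      by simp
    also have "\<dots> \<le> norm (y - \<theta>0) * e' * I"
      unfolding I_def using e' by (intro mult_left_mono) auto
    also have "\<dots> \<le> e * norm (y - \<theta>0)"
    proof -
      have "e' * I \<le> e" unfolding e'_def using e I0 by (auto simp: field_simps)
      then show ?thesis using mult_left_mono[of "e' * I" e "norm (y - \<theta>0)"] by (simp add: ac_simps)
    qed
    finally show "norm ((LINT x|M. F y x) - (LINT x|M. F \<theta>0 x) - (LINT x|M. D \<theta>0 x) \<bullet> (y - \<theta>0)) \<le> e * norm (y - \<theta>0)" .
  qed
qed

lemma cont_param_int:
  fixes \<phi> :: "'y::euclidean_space \<times> 'e::euclidean_space \<Rightarrow> 'b::euclidean_space"
  assumes T: "closed T" and E: "compact E" and c: "continuous_on (T \<times> E) \<phi>" and p: "continuous_on E p"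
  shows "continuous_on T (\<lambda>y. LINT \<epsilon>|lborel. indicator E \<epsilon> *\<^sub>R (p \<epsilon> *\<^sub>R \<phi> (y, \<epsilon>)))"
  unfolding continuous_on_iff
proof (intro ballI allI impI)
  fix y0 and e :: real assume y0: "y0 \<in> T" and e: "e > 0"
  have intp: "integrable lborel (\<lambda>\<epsilon>. indicator E \<epsilon> *\<^sub>R norm (p \<epsilon>))"
  proof -
    have "continuous_on E (\<lambda>\<epsilon>. norm (p \<epsilon>))" using p by (intro continuous_intros)
    from borel_integrable_compact[OF E this] show ?thesis .
  qed
  have inty: "integrable lborel (\<lambda>\<epsilon>. indicator E \<epsilon> *\<^sub>R (p \<epsilon> *\<^sub>R \<phi> (y, \<epsilon>)))" if "y \<in> T" for y
  proof -
    have "continuous_on E (\<lambda>\<epsilon>. \<phi> (y, \<epsilon>))"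
      using that by (intro continuous_on_compose2[OF c]) (auto intro!: continuous_intros)
    then have "continuous_on E (\<lambda>\<epsilon>. p \<epsilon> *\<^sub>R \<phi> (y, \<epsilon>))" using p by (intro continuous_intros)
    from borel_integrable_compact[OF E this] show ?thesis .
  qed
  define I where "I = (LINT \<epsilon>|lborel. indicator E \<epsilon> *\<^sub>R norm (p \<epsilon>))"
  have I0: "I \<ge> 0" unfolding I_def by (intro integral_nonneg_AE) auto
  define e' where "e' = e / (I + 1)"
  have e': "e' > 0" unfolding e'_def using e I0 by auto
  have K: "compact ((T \<inter> cball y0 1) \<times> E)"
    using T E by (intro compact_Times closed_Int_compact) auto
  have "uniformly_continuous_on ((T \<inter> cball y0 1) \<times> E) \<phi>"
    using compact_uniformly_continuous[OF continuous_on_subset[OF c] K] by auto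
  then obtain d where d: "d > 0" and dd: "\<And>x x'. x \<in> (T \<inter> cball y0 1) \<times> E \<Longrightarrow> x' \<in> (T \<inter> cball y0 1) \<times> E \<Longrightarrow> dist x' x < d \<Longrightarrow> dist (\<phi> x') (\<phi> x) < e'"
    unfolding uniformly_continuous_on_def using e' by metis
  show "\<exists>d>0. \<forall>y\<in>T. dist y y0 < d \<longrightarrow> dist (LINT \<epsilon>|lborel. indicator E \<epsilon> *\<^sub>R (p \<epsilon> *\<^sub>R \<phi> (y, \<epsilon>))) (LINT \<epsilon>|lborel. indicator E \<epsilon> *\<^sub>R (p \<epsilon> *\<^sub>R \<phi> (y0, \<epsilon>))) < e"
  proof (intro exI[of _ "min d 1"] conjI ballI impI)
    show "min d 1 > 0" using d by auto
    fix y assume yT: "y \<in> T" and yd: "dist y y0 < min d 1"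
    have pt: "norm (indicator E \<epsilon> *\<^sub>R (p \<epsilon> *\<^sub>R \<phi> (y, \<epsilon>)) - indicator E \<epsilon> *\<^sub>R (p \<epsilon> *\<^sub>R \<phi> (y0, \<epsilon>)))
        \<le> e' * (indicator E \<epsilon> *\<^sub>R norm (p \<epsilon>))" for \<epsilon>
    proof (cases "\<epsilon> \<in> E")
      case True
      have "dist (\<phi> (y, \<epsilon>)) (\<phi> (y0, \<epsilon>)) < e'"
        using yT y0 yd True by (intro dd) (auto simp: dist_Pair_Pair dist_commute)
      then have "norm (\<phi> (y, \<epsilon>) - \<phi> (y0, \<epsilon>)) \<le> e'" by (simp add: dist_norm)
      then have "norm (p \<epsilon>) * norm (\<phi> (y, \<epsilon>) - \<phi> (y0, \<epsilon>)) \<le> norm (p \<epsilon>) * e'"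
        by (intro mult_left_mono) auto
      then show ?thesis using True by (simp add: scaleR_diff_right[symmetric] ac_simps)
    qed simp
    have "dist (LINT \<epsilon>|lborel. indicator E \<epsilon> *\<^sub>R (p \<epsilon> *\<^sub>R \<phi> (y, \<epsilon>))) (LINT \<epsilon>|lborel. indicator E \<epsilon> *\<^sub>R (p \<epsilon> *\<^sub>R \<phi> (y0, \<epsilon>)))
      = norm (LINT \<epsilon>|lborel. indicator E \<epsilon> *\<^sub>R (p \<epsilon> *\<^sub>R \<phi> (y, \<epsilon>)) - indicator E \<epsilon> *\<^sub>R (p \<epsilon> *\<^sub>R \<phi> (y0, \<epsilon>)))"
      using inty[OF yT] inty[OF y0] by (simp add: dist_norm integral_diff)
    also have "\<dots> \<le> (LINT \<epsilon>|lborel. norm (indicator E \<epsilon> *\<^sub>R (p \<epsilon> *\<^sub>R \<phi> (y, \<epsilon>)) - indicator E \<epsilon> *\<^sub>R (p \<epsilon> *\<^sub>R \<phi> (y0, \<epsilon>))))"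
      by (rule integral_norm_bound)
    also have "\<dots> \<le> (LINT \<epsilon>|lborel. e' * (indicator E \<epsilon> *\<^sub>R norm (p \<epsilon>)))"
      using pt inty[OF yT] inty[OF y0] intp by (intro integral_mono) auto
    also have "\<dots> = e' * I" unfolding I_def by simp
    also have "\<dots> < e" unfolding e'_def using e I0 by (auto simp: field_simps)
    finally show "dist (LINT \<epsilon>|lborel. indicator E \<epsilon> *\<^sub>R (p \<epsilon> *\<^sub>R \<phi> (y, \<epsilon>))) (LINT \<epsilon>|lborel. indicator E \<epsilon> *\<^sub>R (p \<epsilon> *\<^sub>R \<phi> (y0, \<epsilon>))) < e" .
  qed
qed

lemma ln_deriv_nz:
  fixes y :: real assumes "y \<noteq> 0" shows "(ln has_real_derivative inverse y) (at y)"
proof (cases "y > 0")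
  case True then show ?thesis using DERIV_ln[of y] by (simp add: divide_inverse)
next
  case False
  then have y: "y < 0" using assms by auto
  have "((\<lambda>z. ln (- z)) has_real_derivative inverse (- y) * (- 1)) (at y)"
    using y by (auto intro!: derivative_eq_intros simp: divide_inverse)
  moreover have "\<forall>\<^sub>F z in nhds y. ln (- z) = ln z"
  proof -
    have "\<forall>\<^sub>F z in nhds y. z < 0" using eventually_nhds_in_open[of "{..<(0::real)}" y] y by simp
    then show ?thesis by eventually_elim (simp add: ln_real_def)
  qed
  ultimately show ?thesis
    by (subst (asm) DERIV_cong_ev[OF refl _ refl]) (auto simp: inverse_eq_divide)
qed

lemma grad_nondiff:
  assumes "\<not> (\<exists>f'. (g has_derivative f') (at x))"
  shows "grad g x = (\<Sum>b\<in>Basis. (SOME f'::'a::euclidean_space\<Rightarrow>real. False) b *\<^sub>R b)"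
proof -
  have "frechet_derivative g (at x) = (SOME f'::'a\<Rightarrow>real. False)"
    unfolding frechet_derivative_def using assms by metis
  then show ?thesis unfolding grad_def by simp
qed

lemma grad_ln_measurable:
  fixes A G :: "'p::euclidean_space \<times> 'y::euclidean_space \<Rightarrow> real"
  assumes A: "C1_on UNIV A" and G: "C1_on UNIV G" and c: "c \<noteq> 0"
  shows "(\<lambda>y. grad (\<lambda>t. A (t, y) - c * ln (G (t, y))) \<theta>0) \<in> borel_measurable borel"
proof -
  obtain DA where cDA: "continuous_on UNIV DA" and dA: "\<And>\<theta> y. ((\<lambda>t. A (t, y)) has_derivative (\<lambda>h. DA (\<theta>, y) \<bullet> h)) (at \<theta>)"
    using C1_on_partial_grad[OF A] by blast
  obtain DG where cDG: "continuous_on UNIV DG" and dG: "\<And>\<theta> y. ((\<lambda>t. G (t, y)) has_derivative (\<lambda>h. DG (\<theta>, y) \<bullet> h)) (at \<theta>)"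
    using C1_on_partial_grad[OF G] by blast
  have cA: "continuous_on UNIV A" and cG: "continuous_on UNIV G" using A G C1_on_cont by auto
  define c0 where "c0 = (\<Sum>b\<in>Basis. (SOME f'::'p\<Rightarrow>real. False) b *\<^sub>R b)"
  define Z where "Z n = {y. \<forall>t\<in>ball \<theta>0 (1 / Suc n). G (t, y) = 0}" for n :: nat
  define Loc where "Loc = (\<Union>n. Z n)"
  define Opn where "Opn = {y. G (\<theta>0, y) \<noteq> 0}"
  have cGy: "continuous_on UNIV (\<lambda>y. G (t, y))" for t
    by (rule continuous_on_compose2[OF cG]) (auto intro!: continuous_intros)
  have "closed (Z n)" for n
  proof -
    have "Z n = (\<Inter>t\<in>ball \<theta>0 (1 / Suc n). {y. G (t, y) = 0})" unfolding Z_def by auto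
    moreover have "closed {y. G (t, y) = 0}" for t
      using closed_Collect_eq[OF cGy continuous_on_const] by simp
    ultimately show ?thesis by auto
  qed
  then have LocB: "Loc \<in> sets borel" unfolding Loc_def by (auto intro!: borel_closed)
  have OpnB: "Opn \<in> sets borel" unfolding Opn_def
    using open_Collect_neq[OF cGy continuous_on_const] by (auto intro!: borel_open)
  have key: "grad (\<lambda>t. A (t, y) - c * ln (G (t, y))) \<theta>0 =
      (if y \<in> Opn then DA (\<theta>0, y) - (c / G (\<theta>0, y)) *\<^sub>R DG (\<theta>0, y) else if y \<in> Loc then DA (\<theta>0, y) else c0)" for y
  proof (cases "y \<in> Opn")
    case True
    then have nz: "G (\<theta>0, y) \<noteq> 0" unfolding Opn_def by auto
    have "((\<lambda>t. ln (G (t, y))) has_derivative (\<lambda>h. inverse (G (\<theta>0, y)) * (DG (\<theta>0, y) \<bullet> h))) (at \<theta>0)"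
    proof -
      have "(ln has_derivative (\<lambda>h. inverse (G (\<theta>0, y)) * h)) (at (G (\<theta>0, y)))"
        using ln_deriv_nz[OF nz] by (simp add: has_field_derivative_def)
      from diff_chain_at[OF dG this] show ?thesis by (simp add: o_def)
    qed
    then have "((\<lambda>t. A (t, y) - c * ln (G (t, y))) has_derivative
        (\<lambda>h. DA (\<theta>0, y) \<bullet> h - c * (inverse (G (\<theta>0, y)) * (DG (\<theta>0, y) \<bullet> h)))) (at \<theta>0)"
      by (intro has_derivative_diff dA has_derivative_mult_right)
    moreover have "(\<lambda>h. DA (\<theta>0, y) \<bullet> h - c * (inverse (G (\<theta>0, y)) * (DG (\<theta>0, y) \<bullet> h)))
        = (\<lambda>h. (DA (\<theta>0, y) - (c / G (\<theta>0, y)) *\<^sub>R DG (\<theta>0, y)) \<bullet> h)"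
      by (auto simp: fun_eq_iff inner_diff_left divide_inverse)
    ultimately show ?thesis using True grad_eq by fastforce
  next
    case False
    then have z: "G (\<theta>0, y) = 0" unfolding Opn_def by auto
    show ?thesis
    proof (cases "y \<in> Loc")
      case True
      then obtain n where n: "y \<in> Z n" unfolding Loc_def by auto
      have "((\<lambda>t. A (t, y) - c * ln (G (t, y))) has_derivative (\<lambda>h. DA (\<theta>0, y) \<bullet> h)) (at \<theta>0)"
        by (rule has_derivative_transform_within_open[OF dA[of y \<theta>0], of "ball \<theta>0 (1 / Suc n)"])
           (use n in \<open>auto simp: Z_def\<close>)
      then show ?thesis using True False grad_eq by fastforce
    next
      case nL: False
      have nd: "\<not> (\<exists>f'. ((\<lambda>t. A (t, y) - c * ln (G (t, y))) has_derivative f') (at \<theta>0))"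
      proof
        assume "\<exists>f'. ((\<lambda>t. A (t, y) - c * ln (G (t, y))) has_derivative f') (at \<theta>0)"
        then have cP: "isCont (\<lambda>t. A (t, y) - c * ln (G (t, y))) \<theta>0"
          using has_derivative_continuous by blast
        have cAy: "isCont (\<lambda>t. A (t, y)) \<theta>0"
          using dA[of y \<theta>0] has_derivative_continuous by blast
        have "isCont (\<lambda>t. (A (t, y) - (A (t, y) - c * ln (G (t, y)))) / c) \<theta>0"
          using continuous_divide[OF continuous_diff[OF cAy cP] continuous_const[of _ c]] c by simp
        moreover have "(\<lambda>t. (A (t, y) - (A (t, y) - c * ln (G (t, y)))) / c) = (\<lambda>t. ln (G (t, y)))"
          using c by auto
        ultimately have cL: "isCont (\<lambda>t. ln (G (t, y))) \<theta>0" by simp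
        then obtain d1 where d1: "d1 > 0" and dd1: "\<And>t. dist t \<theta>0 < d1 \<Longrightarrow> dist (ln (G (t, y))) (ln (G (\<theta>0, y))) < 1"
          unfolding continuous_at_eps_delta by (meson zero_less_one)
        have cGt: "isCont (\<lambda>t. G (t, y)) \<theta>0" using dG[of y \<theta>0] has_derivative_continuous by blast
        then obtain d2 where d2: "d2 > 0" and dd2: "\<And>t. dist t \<theta>0 < d2 \<Longrightarrow> dist (G (t, y)) (G (\<theta>0, y)) < exp (-1)"
          unfolding continuous_at_eps_delta by (meson exp_gt_zero)
        obtain n :: nat where n: "1 / Suc n < min d1 d2"
          using reals_Archimedean[of "min d1 d2"] d1 d2 by (auto simp: inverse_eq_divide)
        from nL have "y \<notin> Z n" unfolding Loc_def by auto
        then obtain t where t: "t \<in> ball \<theta>0 (1 / Suc n)" and nzt: "G (t, y) \<noteq> 0" unfolding Z_def by auto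
        have td: "dist t \<theta>0 < min d1 d2" using t n by (simp add: dist_commute)
        have "\<bar>G (t, y)\<bar> < exp (-1)" using dd2[of t] td z by (simp add: dist_real_def)
        then have "ln \<bar>G (t, y)\<bar> < -1"
        proof -
          have "0 < \<bar>G (t, y)\<bar>" using nzt by simp
          then have "ln \<bar>G (t, y)\<bar> < ln (exp (-1))" using \<open>\<bar>G (t, y)\<bar> < exp (-1)\<close> by (subst ln_less_cancel_iff) auto
          then show ?thesis by simp
        qed
        then have "ln (G (t, y)) < -1" by (simp add: ln_real_def nzt)
        moreover have "\<bar>ln (G (t, y))\<bar> < 1" using dd1[of t] td z by (simp add: dist_real_def)
        ultimately show False by auto
      qed
      show ?thesis using grad_nondiff[OF nd] False nL unfolding c0_def by simp
    qed
  qed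
  have m: "(\<lambda>y. if y \<in> Opn then DA (\<theta>0, y) - (c / G (\<theta>0, y)) *\<^sub>R DG (\<theta>0, y) else if y \<in> Loc then DA (\<theta>0, y) else c0) \<in> borel_measurable borel"
  proof (intro measurable_If_set)
    have "(\<lambda>y. DA (\<theta>0, y)) \<in> borel_measurable borel"
      by (intro borel_measurable_continuous_onI continuous_on_compose2[OF cDA]) (auto intro!: continuous_intros)
    moreover have "(\<lambda>y. DG (\<theta>0, y)) \<in> borel_measurable borel"
      by (intro borel_measurable_continuous_onI continuous_on_compose2[OF cDG]) (auto intro!: continuous_intros)
    moreover have "(\<lambda>y. G (\<theta>0, y)) \<in> borel_measurable borel"
      by (intro borel_measurable_continuous_onI cGy)
    ultimately show "(\<lambda>y. DA (\<theta>0, y) - (c / G (\<theta>0, y)) *\<^sub>R DG (\<theta>0, y)) \<in> borel_measurable borel"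
      by measurable
  qed (use LocB OpnB in \<open>auto intro!: borel_measurable_continuous_onI continuous_on_compose2[OF cDA] continuous_intros\<close>)
  show ?thesis by (subst key) (rule m)
qed

lemma C1_fun_cont: "C1_fun g \<Longrightarrow> continuous_on UNIV g"
  using C1_on_cont C1_fun_C1_on by blast

lemma C1_on_id: "C1_on U (\<lambda>x. x)"
  by (rule C1_on_linear) (rule bounded_linear_ident)

lemma C1_on_fst: "C1_on U g \<Longrightarrow> C1_on U (\<lambda>x. fst (g x))"
  unfolding C1_on_def
  apply (elim exE conjE)
  subgoal for g'
    by (rule exI[of _ "\<lambda>x v. fst (g' x v)"]) (auto intro!: has_derivative_fst continuous_on_fst)
  done

lemma C1_on_snd: "C1_on U g \<Longrightarrow> C1_on U (\<lambda>x. snd (g x))"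
  unfolding C1_on_def
  apply (elim exE conjE)
  subgoal for g'
    by (rule exI[of _ "\<lambda>x v. snd (g' x v)"]) (auto intro!: has_derivative_snd continuous_on_snd)
  done

locale propC5_ctx =
  fixes S :: "'s::euclidean_space set" and A :: "'a::euclidean_space set"
    and E :: "'e::euclidean_space set"
    and N :: nat
    and piw :: "'p::euclidean_space \<Rightarrow> 's \<Rightarrow> nat \<Rightarrow> real"
    and pic :: "'p \<Rightarrow> 's \<Rightarrow> nat \<Rightarrow> 'a \<Rightarrow> real"
    and f :: "'p \<Rightarrow> 's \<Rightarrow> nat \<Rightarrow> 'e \<Rightarrow> 'a"
    and finv :: "'p \<Rightarrow> 's \<Rightarrow> nat \<Rightarrow> 'a \<Rightarrow> 'e"
    and p :: "'e \<Rightarrow> real"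
    and P :: "'s \<Rightarrow> 'a \<Rightarrow> 's \<Rightarrow> real" and d0 :: "'s \<Rightarrow> real" and r :: "'s \<Rightarrow> 'a \<Rightarrow> real"
    and Q :: "'s \<Rightarrow> 'a \<Rightarrow> real"
    and B :: "'s measure"
    and \<alpha> :: real
  assumes S_compact: "compact S" and A_compact: "compact A"
    and N_pos: "N \<ge> 1"
    and alpha_pos: "\<alpha> > 0"
    and B_prob: "prob_space B" and B_sets: "sets B = sets borel" and B_supp: "AE s in B. s \<in> S"
    and piw_pos: "\<And>\<theta> s k. s \<in> S \<Longrightarrow> k \<in> {1..N} \<Longrightarrow> piw \<theta> s k > 0"
    and piw_sum: "\<And>\<theta> s. s \<in> S \<Longrightarrow> (\<Sum>k=1..N. piw \<theta> s k) = 1"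
    and pic_pos: "\<And>\<theta> s k a. s \<in> S \<Longrightarrow> k \<in> {1..N} \<Longrightarrow> a \<in> A \<Longrightarrow> pic \<theta> s k a > 0"
    and p_nonneg: "\<And>\<epsilon>. \<epsilon> \<in> E \<Longrightarrow> p \<epsilon> \<ge> 0"
    and p_prob: "(\<integral>\<^sup>+\<epsilon>. ennreal (indicator E \<epsilon> * p \<epsilon>) \<partial>lborel) = 1"
    \<comment> \<open>reparameterization: f(epsilon;s,k) ~ pi^c(.|s,k) for epsilon ~ p\<close>
    and reparam: "\<And>\<theta> s k X. s \<in> S \<Longrightarrow> k \<in> {1..N} \<Longrightarrow> X \<in> sets borel \<Longrightarrow>
        (\<integral>\<^sup>+\<epsilon>. ennreal (indicator E \<epsilon> * p \<epsilon>) * indicator X (f \<theta> s k \<epsilon>) \<partial>lborel)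
      = (\<integral>\<^sup>+a. ennreal (indicator A a * pic \<theta> s k a) * indicator X a \<partial>lborel)"
    and f_bij: "\<And>\<theta> s k. s \<in> S \<Longrightarrow> k \<in> {1..N} \<Longrightarrow> bij_betw (f \<theta> s k) E A"
    and finv_f: "\<And>\<theta> s k \<epsilon>. s \<in> S \<Longrightarrow> k \<in> {1..N} \<Longrightarrow> \<epsilon> \<in> E \<Longrightarrow> finv \<theta> s k (f \<theta> s k \<epsilon>) = \<epsilon>"
    and f_finv: "\<And>\<theta> s k a. s \<in> S \<Longrightarrow> k \<in> {1..N} \<Longrightarrow> a \<in> A \<Longrightarrow> f \<theta> s k (finv \<theta> s k a) = a"
    and P_C1: "C1_fun (\<lambda>(s, a, s'). P s a s')"
    and d0_C1: "C1_fun d0"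
    and r_C1: "C1_fun (\<lambda>(s, a). r s a)"
    and f_C1: "\<And>k. k \<in> {1..N} \<Longrightarrow> C1_fun (\<lambda>(\<theta>, s, \<epsilon>). f \<theta> s k \<epsilon>)"
    and finv_C1: "\<And>k. k \<in> {1..N} \<Longrightarrow> C1_fun (\<lambda>(\<theta>, s, a). finv \<theta> s k a)"
    and piw_C1: "\<And>k. k \<in> {1..N} \<Longrightarrow> C1_fun (\<lambda>(\<theta>, s). piw \<theta> s k)"
    and pic_C1: "\<And>k. k \<in> {1..N} \<Longrightarrow> C1_fun (\<lambda>(\<theta>, s, a). pic \<theta> s k a)"
    and p_C1: "C1_fun p"
    and Q_C1: "C1_fun (\<lambda>(s, a). Q s a)"
begin

abbreviation "pim \<equiv> mixture_policy N piw pic"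

lemma S_ne: "S \<noteq> {}"
proof
  assume "S = {}"
  then have "AE s in B. False" using B_supp by simp
  then show False using prob_space.AE_False[OF B_prob] by simp
qed

lemma N1: "1 \<in> {1..N}" using N_pos by simp

lemma finv_cont: "k \<in> {1..N} \<Longrightarrow> continuous_on UNIV (finv \<theta> s k)"
proof -
  assume k: "k \<in> {1..N}"
  have "continuous_on UNIV (\<lambda>a. (\<lambda>(\<theta>, s, a). finv \<theta> s k a) (\<theta>, s, a))"
    by (rule continuous_on_compose2[OF C1_fun_cont[OF finv_C1[OF k]]]) (auto intro!: continuous_intros)
  then show ?thesis by simp
qed

lemma f_cont: "k \<in> {1..N} \<Longrightarrow> continuous_on UNIV (f \<theta> s k)"
proof -
  assume k: "k \<in> {1..N}"
  have "continuous_on UNIV (\<lambda>a. (\<lambda>(\<theta>, s, a). f \<theta> s k a) (\<theta>, s, a))"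
    by (rule continuous_on_compose2[OF C1_fun_cont[OF f_C1[OF k]]]) (auto intro!: continuous_intros)
  then show ?thesis by simp
qed

lemma pic_cont: "k \<in> {1..N} \<Longrightarrow> continuous_on UNIV (pic \<theta> s k)"
proof -
  assume k: "k \<in> {1..N}"
  have "continuous_on UNIV (\<lambda>a. (\<lambda>(\<theta>, s, a). pic \<theta> s k a) (\<theta>, s, a))"
    by (rule continuous_on_compose2[OF C1_fun_cont[OF pic_C1[OF k]]]) (auto intro!: continuous_intros)
  then show ?thesis by simp
qed

lemma p_cont: "continuous_on UNIV p" using C1_fun_cont[OF p_C1] .

lemma E_compact: "compact E"
proof -
  obtain s0 where s0: "s0 \<in> S" using S_ne by auto
  have "E = finv 0 s0 1 ` A"
  proof
    show "E \<subseteq> finv 0 s0 1 ` A"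
    proof
      fix e assume e: "e \<in> E"
      have "f 0 s0 1 e \<in> A" using bij_betwE[OF f_bij[OF s0 N1]] e by blast
      moreover have "finv 0 s0 1 (f 0 s0 1 e) = e" using finv_f[OF s0 N1 e] .
      ultimately show "e \<in> finv 0 s0 1 ` A" by (metis image_eqI)
    qed
    show "finv 0 s0 1 ` A \<subseteq> E"
    proof
      fix x assume "x \<in> finv 0 s0 1 ` A"
      then obtain a where a: "a \<in> A" and x: "x = finv 0 s0 1 a" by blast
      have "A = f 0 s0 1 ` E" using f_bij[OF s0 N1] by (simp add: bij_betw_def)
      then obtain e where e: "e \<in> E" and ae: "a = f 0 s0 1 e" using a by blast
      show "x \<in> E" using x ae finv_f[OF s0 N1 e] e by simp
    qed
  qed
  then show ?thesis
    using compact_continuous_image[OF continuous_on_subset[OF finv_cont[OF N1]] A_compact] by auto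
qed

lemma E_borel: "E \<in> sets borel" using E_compact by (simp add: borel_compact)
lemma A_borel: "A \<in> sets borel" using A_compact by (simp add: borel_compact)

lemma f_in_A: "s \<in> S \<Longrightarrow> k \<in> {1..N} \<Longrightarrow> \<epsilon> \<in> E \<Longrightarrow> f \<theta> s k \<epsilon> \<in> A"
  using bij_betwE[OF f_bij] by blast

lemma pim_pos: "s \<in> S \<Longrightarrow> a \<in> A \<Longrightarrow> pim \<theta> s a > 0"
  unfolding mixture_policy_def using N_pos
  by (intro sum_pos) (auto intro!: mult_pos_pos piw_pos pic_pos)

lemma pushforward:
  assumes s: "s \<in> S" and k: "k \<in> {1..N}" and h: "(h :: 'a \<Rightarrow> real) \<in> borel_measurable borel"
  shows "(LINT a|lborel. (indicator A a * pic \<theta> s k a) *\<^sub>R h a) = (LINT \<epsilon>|lborel. (indicator E \<epsilon> * p \<epsilon>) *\<^sub>R h (f \<theta> s k \<epsilon>))"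
proof -
  have fm: "f \<theta> s k \<in> borel_measurable borel"
    using f_cont[OF k] by (rule borel_measurable_continuous_onI)
  have pm: "(\<lambda>\<epsilon>. indicator E \<epsilon> * p \<epsilon>) \<in> borel_measurable borel"
    using E_borel p_cont by (intro borel_measurable_times borel_measurable_indicator borel_measurable_continuous_onI) auto
  have cm: "(\<lambda>a. indicator A a * pic \<theta> s k a) \<in> borel_measurable borel"
    using A_borel pic_cont[OF k] by (intro borel_measurable_times borel_measurable_indicator borel_measurable_continuous_onI) auto
  have eq: "distr (density lborel (\<lambda>\<epsilon>. ennreal (indicator E \<epsilon> * p \<epsilon>))) borel (f \<theta> s k)
      = density lborel (\<lambda>a. ennreal (indicator A a * pic \<theta> s k a))"
  proof (rule measure_eqI)
    show "sets (distr (density lborel (\<lambda>\<epsilon>. ennreal (indicator E \<epsilon> * p \<epsilon>))) borel (f \<theta> s k)) =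
        sets (density lborel (\<lambda>a. ennreal (indicator A a * pic \<theta> s k a)))" by simp
    fix X assume "X \<in> sets (distr (density lborel (\<lambda>\<epsilon>. ennreal (indicator E \<epsilon> * p \<epsilon>))) borel (f \<theta> s k))"
    then have X: "X \<in> sets borel" by simp
    have fm': "f \<theta> s k \<in> measurable (density lborel (\<lambda>\<epsilon>. ennreal (indicator E \<epsilon> * p \<epsilon>))) borel"
      using fm by simp
    have "emeasure (distr (density lborel (\<lambda>\<epsilon>. ennreal (indicator E \<epsilon> * p \<epsilon>))) borel (f \<theta> s k)) X
        = emeasure (density lborel (\<lambda>\<epsilon>. ennreal (indicator E \<epsilon> * p \<epsilon>))) (f \<theta> s k -` X)"
      using emeasure_distr[OF fm' X] by (simp only: space_density space_lborel space_borel Int_UNIV_right)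
    also have "\<dots> = (\<integral>\<^sup>+\<epsilon>. ennreal (indicator E \<epsilon> * p \<epsilon>) * indicator (f \<theta> s k -` X) \<epsilon> \<partial>lborel)"
      using pm measurable_sets[OF fm X] by (intro emeasure_density) auto
    also have "\<dots> = (\<integral>\<^sup>+\<epsilon>. ennreal (indicator E \<epsilon> * p \<epsilon>) * indicator X (f \<theta> s k \<epsilon>) \<partial>lborel)"
      by (simp only: indicator_vimage)
    also have "\<dots> = (\<integral>\<^sup>+a. ennreal (indicator A a * pic \<theta> s k a) * indicator X a \<partial>lborel)"
      using reparam[OF s k X] .
    also have "\<dots> = emeasure (density lborel (\<lambda>a. ennreal (indicator A a * pic \<theta> s k a))) X"
      using cm X by (intro emeasure_density[symmetric]) auto
    finally show "emeasure (distr (density lborel (\<lambda>\<epsilon>. ennreal (indicator E \<epsilon> * p \<epsilon>))) borel (f \<theta> s k)) X =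
        emeasure (density lborel (\<lambda>a. ennreal (indicator A a * pic \<theta> s k a))) X" .
  qed
  have "(LINT a|lborel. (indicator A a * pic \<theta> s k a) *\<^sub>R h a)
      = integral\<^sup>L (density lborel (\<lambda>a. ennreal (indicator A a * pic \<theta> s k a))) h"
  proof (rule integral_density[of h lborel "\<lambda>a. indicator A a * pic \<theta> s k a", symmetric])
    show "h \<in> borel_measurable lborel" using h by simp
    show "(\<lambda>a. indicator A a * pic \<theta> s k a) \<in> borel_measurable lborel" using cm by simp
    show "AE x in lborel. 0 \<le> indicator A x * pic \<theta> s k x"
      by (rule AE_I2) (use pic_pos[OF s k] in \<open>auto simp: indicator_def less_imp_le\<close>)
  qed
  also have "\<dots> = integral\<^sup>L (distr (density lborel (\<lambda>\<epsilon>. ennreal (indicator E \<epsilon> * p \<epsilon>))) borel (f \<theta> s k)) h"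
    by (simp only: eq)
  also have "\<dots> = integral\<^sup>L (density lborel (\<lambda>\<epsilon>. ennreal (indicator E \<epsilon> * p \<epsilon>))) (\<lambda>\<epsilon>. h (f \<theta> s k \<epsilon>))"
  proof (rule integral_distr[OF _ h])
    show "f \<theta> s k \<in> measurable (density lborel (\<lambda>\<epsilon>. ennreal (indicator E \<epsilon> * p \<epsilon>))) borel"
      using fm by simp
  qed
  also have "\<dots> = (LINT \<epsilon>|lborel. (indicator E \<epsilon> * p \<epsilon>) *\<^sub>R h (f \<theta> s k \<epsilon>))"
  proof (rule integral_density[of "\<lambda>\<epsilon>. h (f \<theta> s k \<epsilon>)" lborel "\<lambda>\<epsilon>. indicator E \<epsilon> * p \<epsilon>"])
    show "(\<lambda>\<epsilon>. h (f \<theta> s k \<epsilon>)) \<in> borel_measurable lborel" using measurable_compose[OF fm h] by simp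
    show "(\<lambda>\<epsilon>. indicator E \<epsilon> * p \<epsilon>) \<in> borel_measurable lborel" using pm by simp
    show "AE x in lborel. 0 \<le> indicator E x * p x"
      by (rule AE_I2) (use p_nonneg in \<open>auto simp: indicator_def\<close>)
  qed
  finally show ?thesis .
qed

end

context propC5_ctx
begin

definition "fx k x = f (fst x) (fst (snd x)) k (snd (snd x))"
definition "Gx k x = pim (fst x) (fst (snd x)) (fx k x)"
definition "Ax k x = Q (fst (snd x)) (fx k x)"
definition "Phi k x = Ax k x - \<alpha> * ln (Gx k x)"
definition "Uk k = {x. Gx k x \<noteq> 0}"

lemma C1_fx: "k \<in> {1..N} \<Longrightarrow> C1_on U (fx k)"
proof -
  assume k: "k \<in> {1..N}"
  have "(\<lambda>(\<theta>, s, \<epsilon>). f \<theta> s k \<epsilon>) = fx k" by (auto simp: fun_eq_iff split_beta fx_def)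
  then show ?thesis using C1_fun_C1_on[OF f_C1[OF k]] by metis
qed

lemma C1_piw3: "j \<in> {1..N} \<Longrightarrow> C1_on U (\<lambda>x::'p \<times> 's \<times> 'e. piw (fst x) (fst (snd x)) j)"
proof -
  assume j: "j \<in> {1..N}"
  have "C1_on U (\<lambda>x::'p \<times> 's \<times> 'e. (\<lambda>(\<theta>, s). piw \<theta> s j) (fst x, fst (snd x)))"
    by (intro C1_on_compose[OF piw_C1[OF j]] C1_on_pair C1_on_fst C1_on_snd C1_on_id)
  then show ?thesis by simp
qed

lemma C1_piw2: "j \<in> {1..N} \<Longrightarrow> C1_on U (\<lambda>x::'p \<times> 's. piw (fst x) (snd x) j)"
proof -
  assume j: "j \<in> {1..N}"
  have "C1_on U (\<lambda>x::'p \<times> 's. (\<lambda>(\<theta>, s). piw \<theta> s j) x)"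
    by (intro C1_on_compose[OF piw_C1[OF j]] C1_on_id)
  then show ?thesis by (simp add: case_prod_beta)
qed

lemma C1_pic3: "j \<in> {1..N} \<Longrightarrow> k \<in> {1..N} \<Longrightarrow> C1_on U (\<lambda>x. pic (fst x) (fst (snd x)) j (fx k x))"
proof -
  assume j: "j \<in> {1..N}" and k: "k \<in> {1..N}"
  have "C1_on U (\<lambda>x. (\<lambda>(\<theta>, s, a). pic \<theta> s j a) (fst x, fst (snd x), fx k x))"
    by (intro C1_on_compose[OF pic_C1[OF j]] C1_on_pair C1_on_fst C1_on_snd C1_on_id C1_fx[OF k])
  then show ?thesis by simp
qed

lemma C1_Gx: "k \<in> {1..N} \<Longrightarrow> C1_on U (Gx k)"
proof -
  assume k: "k \<in> {1..N}"
  have "C1_on U (\<lambda>x. \<Sum>j\<in>{1..N}. piw (fst x) (fst (snd x)) j * pic (fst x) (fst (snd x)) j (fx k x))"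
    by (intro C1_on_sum C1_on_mult C1_piw3 C1_pic3 k) auto
  moreover have "Gx k = (\<lambda>x. \<Sum>j\<in>{1..N}. piw (fst x) (fst (snd x)) j * pic (fst x) (fst (snd x)) j (fx k x))"
    by (simp add: fun_eq_iff Gx_def mixture_policy_def)
  ultimately show ?thesis by simp
qed

lemma C1_Ax: "k \<in> {1..N} \<Longrightarrow> C1_on U (Ax k)"
proof -
  assume k: "k \<in> {1..N}"
  have "C1_on U (\<lambda>x. (\<lambda>(s, a). Q s a) (fst (snd x), fx k x))"
    by (intro C1_on_compose[OF Q_C1] C1_on_pair C1_on_fst C1_on_snd C1_on_id C1_fx[OF k])
  then show ?thesis by (simp add: Ax_def[abs_def])
qed

lemma Gx_cont: "k \<in> {1..N} \<Longrightarrow> continuous_on UNIV (Gx k)"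
  using C1_on_cont[OF C1_Gx] by blast

lemma Uk_open: "k \<in> {1..N} \<Longrightarrow> open (Uk k)"
  unfolding Uk_def using open_Collect_neq[OF Gx_cont continuous_on_const] by blast

lemma SE_Uk: "k \<in> {1..N} \<Longrightarrow> (UNIV::'p set) \<times> (S \<times> E) \<subseteq> Uk k"
proof
  fix x assume k: "k \<in> {1..N}" and x: "x \<in> (UNIV::'p set) \<times> (S \<times> E)"
  then have "fx k x \<in> A" unfolding fx_def by (intro f_in_A) auto
  then have "Gx k x > 0" unfolding Gx_def using x by (intro pim_pos) auto
  then show "x \<in> Uk k" unfolding Uk_def by auto
qed

lemma C1_Phi: "k \<in> {1..N} \<Longrightarrow> C1_on (Uk k) (Phi k)"
proof -
  assume k: "k \<in> {1..N}"
  have "C1_on (Uk k) (\<lambda>x. Ax k x - \<alpha> * ln (Gx k x))"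
    by (intro C1_on_diff C1_on_mult C1_on_const C1_Ax k C1_on_ln C1_Gx) (auto simp: Uk_def)
  then show ?thesis by (simp add: Phi_def[abs_def])
qed

definition "DPhi k = (SOME D. continuous_on (Uk k) D \<and> (\<forall>\<theta> y. (\<theta>, y) \<in> Uk k \<longrightarrow> ((\<lambda>t. Phi k (t, y)) has_derivative (\<lambda>h. D (\<theta>, y) \<bullet> h)) (at \<theta>)))"

lemma DPhi: assumes k: "k \<in> {1..N}"
  shows "continuous_on (Uk k) (DPhi k)"
    and "(\<theta>, y) \<in> Uk k \<Longrightarrow> ((\<lambda>t. Phi k (t, y)) has_derivative (\<lambda>h. DPhi k (\<theta>, y) \<bullet> h)) (at \<theta>)"
proof -
  have "\<exists>D. continuous_on (Uk k) D \<and> (\<forall>\<theta> y. (\<theta>, y) \<in> Uk k \<longrightarrow> ((\<lambda>t. Phi k (t, y)) has_derivative (\<lambda>h. D (\<theta>, y) \<bullet> h)) (at \<theta>))"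
    by (rule C1_on_partial_grad[OF C1_Phi[OF k]])
  from someI_ex[OF this] show "continuous_on (Uk k) (DPhi k)"
    and "(\<theta>, y) \<in> Uk k \<Longrightarrow> ((\<lambda>t. Phi k (t, y)) has_derivative (\<lambda>h. DPhi k (\<theta>, y) \<bullet> h)) (at \<theta>)"
    unfolding DPhi_def by blast+
qed

definition "DW k = (SOME D. continuous_on UNIV D \<and> (\<forall>\<theta> s. ((\<lambda>t. piw t s k) has_derivative (\<lambda>h. D (\<theta>, s) \<bullet> h)) (at \<theta>)))"

lemma DW: assumes k: "k \<in> {1..N}"
  shows "continuous_on UNIV (DW k)"
    and "((\<lambda>t. piw t s k) has_derivative (\<lambda>h. DW k (\<theta>, s) \<bullet> h)) (at \<theta>)"
proof -
  have "\<exists>D. continuous_on UNIV D \<and> (\<forall>\<theta> s. (\<theta>, s) \<in> UNIV \<longrightarrow> ((\<lambda>t. piw (fst (t, s)) (snd (t, s)) k) has_derivative (\<lambda>h. D (\<theta>, s) \<bullet> h)) (at \<theta>))"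
    by (rule C1_on_partial_grad[OF C1_piw2[OF k]])
  then have "\<exists>D. continuous_on UNIV D \<and> (\<forall>\<theta> s. ((\<lambda>t. piw t s k) has_derivative (\<lambda>h. D (\<theta>, s) \<bullet> h)) (at \<theta>))"
    by simp
  from someI_ex[OF this] show "continuous_on UNIV (DW k)"
    and "((\<lambda>t. piw t s k) has_derivative (\<lambda>h. DW k (\<theta>, s) \<bullet> h)) (at \<theta>)"
    unfolding DW_def by blast+
qed

lemma Phi_cont: "k \<in> {1..N} \<Longrightarrow> continuous_on ((UNIV::'p set) \<times> (S \<times> E)) (Phi k)"
  using continuous_on_subset[OF C1_on_cont[OF C1_Phi] SE_Uk] by blast

lemma DPhi_cont: "k \<in> {1..N} \<Longrightarrow> continuous_on ((UNIV::'p set) \<times> (S \<times> E)) (DPhi k)"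
  using continuous_on_subset[OF DPhi(1) SE_Uk] by blast

end

context propC5_ctx
begin

definition "Gk k \<theta> s = (LINT \<epsilon>|lborel. indicator E \<epsilon> *\<^sub>R (p \<epsilon> *\<^sub>R Phi k (\<theta>, s, \<epsilon>)))"
definition "DGk k \<theta> s = (LINT \<epsilon>|lborel. indicator E \<epsilon> *\<^sub>R (p \<epsilon> *\<^sub>R DPhi k (\<theta>, s, \<epsilon>)))"

lemma closed_T: "closed ((UNIV::'p set) \<times> S)"
  using S_compact by (intro closed_Times) (auto intro: compact_imp_closed)

lemma G_cont: assumes k: "k \<in> {1..N}"
  shows "continuous_on ((UNIV::'p set) \<times> S) (\<lambda>y. Gk k (fst y) (snd y))"
proof -
  have c: "continuous_on (((UNIV::'p set) \<times> S) \<times> E) (\<lambda>z. Phi k (fst (fst z), snd (fst z), snd z))"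
    by (rule continuous_on_compose2[OF Phi_cont[OF k]]) (auto intro!: continuous_intros)
  show ?thesis
    using cont_param_int[OF closed_T E_compact c continuous_on_subset[OF p_cont]] by (simp add: Gk_def)
qed

lemma DG_cont: assumes k: "k \<in> {1..N}"
  shows "continuous_on ((UNIV::'p set) \<times> S) (\<lambda>y. DGk k (fst y) (snd y))"
proof -
  have c: "continuous_on (((UNIV::'p set) \<times> S) \<times> E) (\<lambda>z. DPhi k (fst (fst z), snd (fst z), snd z))"
    by (rule continuous_on_compose2[OF DPhi_cont[OF k]]) (auto intro!: continuous_intros)
  show ?thesis
    using cont_param_int[OF closed_T E_compact c continuous_on_subset[OF p_cont]] by (simp add: DGk_def)
qed

lemma G_deriv: assumes s: "s \<in> S" and k: "k \<in> {1..N}"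
  shows "((\<lambda>t. Gk k t s) has_derivative (\<lambda>h. DGk k \<theta> s \<bullet> h)) (at \<theta>)"
  unfolding Gk_def DGk_def
proof (rule diff_under_integral[where g="\<lambda>\<epsilon>. indicator E \<epsilon> * p \<epsilon>"])
  have cP: "continuous_on E (\<lambda>\<epsilon>. Phi k (t, s, \<epsilon>))" for t
    by (rule continuous_on_compose2[OF Phi_cont[OF k]]) (use s in \<open>auto intro!: continuous_intros\<close>)
  have cD: "continuous_on E (\<lambda>\<epsilon>. DPhi k (t, s, \<epsilon>))" for t
    by (rule continuous_on_compose2[OF DPhi_cont[OF k]]) (use s in \<open>auto intro!: continuous_intros\<close>)
  have pE: "continuous_on E p" using continuous_on_subset[OF p_cont] by blast
  show "integrable lborel (\<lambda>\<epsilon>. indicator E \<epsilon> *\<^sub>R (p \<epsilon> *\<^sub>R Phi k (t, s, \<epsilon>)))" for t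
  proof -
    have "continuous_on E (\<lambda>\<epsilon>. p \<epsilon> *\<^sub>R Phi k (t, s, \<epsilon>))" using cP pE by (intro continuous_intros)
    from borel_integrable_compact[OF E_compact this] show ?thesis .
  qed
  show "integrable lborel (\<lambda>\<epsilon>. indicator E \<epsilon> *\<^sub>R (p \<epsilon> *\<^sub>R DPhi k (\<theta>, s, \<epsilon>)))"
  proof -
    have "continuous_on E (\<lambda>\<epsilon>. p \<epsilon> *\<^sub>R DPhi k (\<theta>, s, \<epsilon>))" using cD pE by (intro continuous_intros)
    from borel_integrable_compact[OF E_compact this] show ?thesis .
  qed
  show "integrable lborel (\<lambda>\<epsilon>. indicator E \<epsilon> * p \<epsilon>)"
  proof -
    from borel_integrable_compact[OF E_compact pE] show ?thesis by simp
  qed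
  show "AE x in lborel. \<forall>\<theta>'. ((\<lambda>t. indicator E x *\<^sub>R (p x *\<^sub>R Phi k (t, s, x))) has_derivative
      (\<lambda>h. (indicator E x *\<^sub>R (p x *\<^sub>R DPhi k (\<theta>', s, x))) \<bullet> h)) (at \<theta>')"
  proof (rule AE_I2, rule allI)
    fix x \<theta>'
    show "((\<lambda>t. indicator E x *\<^sub>R (p x *\<^sub>R Phi k (t, s, x))) has_derivative
      (\<lambda>h. (indicator E x *\<^sub>R (p x *\<^sub>R DPhi k (\<theta>', s, x))) \<bullet> h)) (at \<theta>')"
    proof (cases "x \<in> E")
      case True
      then have "(\<theta>', s, x) \<in> Uk k" using SE_Uk[OF k] s by auto
      from has_derivative_mult_right[OF DPhi(2)[OF k this], of "p x"]
      show ?thesis using True by (simp add: inner_scaleR_left)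
    next
      case False
      then show ?thesis by simp
    qed
  qed
  fix e :: real assume e: "e > 0"
  have K: "compact (cball \<theta> 1 \<times> ({s} \<times> E))"
    using E_compact by (intro compact_Times) auto
  have KU: "cball \<theta> 1 \<times> ({s} \<times> E) \<subseteq> (UNIV::'p set) \<times> (S \<times> E)" using s by auto
  have "uniformly_continuous_on (cball \<theta> 1 \<times> ({s} \<times> E)) (DPhi k)"
    using compact_uniformly_continuous[OF continuous_on_subset[OF DPhi_cont[OF k] KU] K] .
  then obtain d where d: "d > 0" and dd: "\<And>x x'. x \<in> cball \<theta> 1 \<times> ({s} \<times> E) \<Longrightarrow> x' \<in> cball \<theta> 1 \<times> ({s} \<times> E) \<Longrightarrow> dist x' x < d \<Longrightarrow> dist (DPhi k x') (DPhi k x) < e"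
    unfolding uniformly_continuous_on_def using e by metis
  show "\<exists>d>0. AE x in lborel. \<forall>\<theta>'. dist \<theta>' \<theta> < d \<longrightarrow>
      norm (indicator E x *\<^sub>R (p x *\<^sub>R DPhi k (\<theta>', s, x)) - indicator E x *\<^sub>R (p x *\<^sub>R DPhi k (\<theta>, s, x))) \<le> e * (indicator E x * p x)"
  proof (intro exI[of _ "min d 1"] conjI AE_I2 allI impI)
    show "min d 1 > 0" using d by auto
    fix x \<theta>' assume th: "dist \<theta>' \<theta> < min d 1"
    show "norm (indicator E x *\<^sub>R (p x *\<^sub>R DPhi k (\<theta>', s, x)) - indicator E x *\<^sub>R (p x *\<^sub>R DPhi k (\<theta>, s, x))) \<le> e * (indicator E x * p x)"
    proof (cases "x \<in> E")
      case True
      have "dist (DPhi k (\<theta>', s, x)) (DPhi k (\<theta>, s, x)) < e"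
        using True th by (intro dd) (auto simp: dist_Pair_Pair dist_commute)
      then have n: "norm (DPhi k (\<theta>', s, x) - DPhi k (\<theta>, s, x)) \<le> e" by (simp add: dist_norm)
      have p0: "p x \<ge> 0" using p_nonneg True by auto
      have "norm (p x *\<^sub>R DPhi k (\<theta>', s, x) - p x *\<^sub>R DPhi k (\<theta>, s, x)) = p x * norm (DPhi k (\<theta>', s, x) - DPhi k (\<theta>, s, x))"
        using p0 by (simp add: scaleR_diff_right[symmetric])
      also have "\<dots> \<le> p x * e" using n p0 by (intro mult_left_mono) auto
      finally show ?thesis using True by (simp add: mult.commute)
    next
      case False
      then show ?thesis by simp
    qed
  qed
qed

lemma Q_cont_a: "continuous_on UNIV (Q s)"
proof -
  have "continuous_on UNIV (\<lambda>a. (\<lambda>(s, a). Q s a) (s, a))"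
    by (rule continuous_on_compose2[OF C1_fun_cont[OF Q_C1]]) (auto intro!: continuous_intros)
  then show ?thesis by simp
qed

lemma pim_cont_a: "continuous_on UNIV (pim \<theta> s)"
proof -
  have "continuous_on UNIV (\<lambda>a. \<Sum>k\<in>{1..N}. piw \<theta> s k * pic \<theta> s k a)"
    by (intro continuous_on_sum continuous_on_mult continuous_on_const pic_cont) auto
  then show ?thesis by (simp add: mixture_policy_def[abs_def])
qed

lemma Jint_eq: assumes s: "s \<in> S"
  shows "(LINT a:A|lborel. pim \<theta> s a * (Q s a - \<alpha> * ln (pim \<theta> s a))) = (\<Sum>k\<in>{1..N}. piw \<theta> s k * Gk k \<theta> s)"
proof -
  define h where "h a = Q s a - \<alpha> * ln (pim \<theta> s a)" for a
  have hm: "h \<in> borel_measurable borel"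
    unfolding h_def using borel_measurable_continuous_onI[OF Q_cont_a] borel_measurable_continuous_onI[OF pim_cont_a]
    by measurable
  have hc: "continuous_on A h"
  proof -
    have pos: "\<forall>a\<in>A. pim \<theta> s a \<noteq> 0" using pim_pos[OF s] by (metis less_irrefl)
    show ?thesis
    unfolding h_def using pos
    by (intro continuous_intros continuous_on_subset[OF Q_cont_a] continuous_on_subset[OF pim_cont_a]) auto
  qed
  have int: "integrable lborel (\<lambda>a. (indicator A a * pic \<theta> s k a) *\<^sub>R h a)" if k: "k \<in> {1..N}" for k
  proof -
    have "continuous_on A (\<lambda>a. pic \<theta> s k a * h a)"
      using hc continuous_on_subset[OF pic_cont[OF k]] by (intro continuous_intros) auto
    from borel_integrable_compact[OF A_compact this] show ?thesis by (simp add: ac_simps)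
  qed
  have "(LINT a:A|lborel. pim \<theta> s a * (Q s a - \<alpha> * ln (pim \<theta> s a)))
      = (LINT a|lborel. (\<Sum>k\<in>{1..N}. piw \<theta> s k * ((indicator A a * pic \<theta> s k a) *\<^sub>R h a)))"
    unfolding set_lebesgue_integral_def h_def
    by (rule Bochner_Integration.integral_cong) (auto simp: mixture_policy_def sum_distrib_right sum_distrib_left ac_simps)
  also have "\<dots> = (\<Sum>k\<in>{1..N}. piw \<theta> s k * (LINT a|lborel. (indicator A a * pic \<theta> s k a) *\<^sub>R h a))"
    using int by (simp add: Bochner_Integration.integral_sum)
  also have "\<dots> = (\<Sum>k\<in>{1..N}. piw \<theta> s k * (LINT \<epsilon>|lborel. (indicator E \<epsilon> * p \<epsilon>) *\<^sub>R h (f \<theta> s k \<epsilon>)))"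
    using pushforward[OF s _ hm] by simp
  also have "\<dots> = (\<Sum>k\<in>{1..N}. piw \<theta> s k * Gk k \<theta> s)"
    unfolding Gk_def
    by (intro sum.cong refl arg_cong2[where f="(*)"] Bochner_Integration.integral_cong)
       (auto simp: h_def Phi_def Ax_def Gx_def fx_def)
  finally show ?thesis .
qed

end

context propC5_ctx
begin

definition "Jint \<theta> s = (LINT a:A|lborel. pim \<theta> s a * (Q s a - \<alpha> * ln (pim \<theta> s a)))"
definition "DJ \<theta> s = (\<Sum>k\<in>{1..N}. Gk k \<theta> s *\<^sub>R DW k (\<theta>, s) + piw \<theta> s k *\<^sub>R DGk k \<theta> s)"

lemma piw_cont2: "k \<in> {1..N} \<Longrightarrow> continuous_on UNIV (\<lambda>y::'p \<times> 's. piw (fst y) (snd y) k)"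
  using C1_on_cont[OF C1_piw2] by blast

lemma J_deriv: assumes s: "s \<in> S"
  shows "((\<lambda>t. Jint t s) has_derivative (\<lambda>h. DJ \<theta> s \<bullet> h)) (at \<theta>)"
proof -
  have eq: "(\<lambda>t. Jint t s) = (\<lambda>t. \<Sum>k\<in>{1..N}. piw t s k * Gk k t s)"
    using Jint_eq[OF s] by (simp add: Jint_def fun_eq_iff)
  have "((\<lambda>t. \<Sum>k\<in>{1..N}. piw t s k * Gk k t s) has_derivative
      (\<lambda>h. \<Sum>k\<in>{1..N}. piw \<theta> s k * (DGk k \<theta> s \<bullet> h) + (DW k (\<theta>, s) \<bullet> h) * Gk k \<theta> s)) (at \<theta>)"
    by (intro has_derivative_sum has_derivative_mult DW(2) G_deriv[OF s]; simp)
  moreover have "(\<lambda>h. \<Sum>k\<in>{1..N}. piw \<theta> s k * (DGk k \<theta> s \<bullet> h) + (DW k (\<theta>, s) \<bullet> h) * Gk k \<theta> s) = (\<lambda>h. DJ \<theta> s \<bullet> h)"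
    by (auto simp: fun_eq_iff DJ_def inner_sum_left inner_add_left intro!: sum.cong)
  ultimately show ?thesis by (simp add: eq)
qed

lemma DJ_cont: "continuous_on ((UNIV::'p set) \<times> S) (\<lambda>y. DJ (fst y) (snd y))"
  unfolding DJ_def
proof (intro continuous_on_sum continuous_on_add continuous_on_scaleR)
  fix k assume k: "k \<in> {1..N}"
  show "continuous_on ((UNIV::'p set) \<times> S) (\<lambda>y. Gk k (fst y) (snd y))" using G_cont[OF k] .
  show "continuous_on ((UNIV::'p set) \<times> S) (\<lambda>y. DGk k (fst y) (snd y))" using DG_cont[OF k] .
  show "continuous_on ((UNIV::'p set) \<times> S) (\<lambda>y. DW k (fst y, snd y))"
    using continuous_on_subset[OF DW(1)[OF k]] by simp
  show "continuous_on ((UNIV::'p set) \<times> S) (\<lambda>y. piw (fst y) (snd y) k)"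
    using continuous_on_subset[OF piw_cont2[OF k]] by simp
qed

lemma Jsum_cont: "continuous_on S (\<lambda>s. \<Sum>k\<in>{1..N}. piw \<theta> s k * Gk k \<theta> s)"
proof (intro continuous_on_sum continuous_on_mult)
  fix k assume k: "k \<in> {1..N}"
  show "continuous_on S (\<lambda>s. piw \<theta> s k)"
    by (rule continuous_on_compose2[OF piw_cont2[OF k], of _ "\<lambda>s. (\<theta>, s)", simplified]) (auto intro!: continuous_intros)
  show "continuous_on S (\<lambda>s. Gk k \<theta> s)"
    by (rule continuous_on_compose2[OF G_cont[OF k], of _ "\<lambda>s. (\<theta>, s)", simplified]) (auto intro!: continuous_intros)
qed

lemma pim_cont_sa: "continuous_on UNIV (\<lambda>x::'s \<times> 'a. pim \<theta> (fst x) (snd x))"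
proof -
  have "continuous_on UNIV (\<lambda>x::'s \<times> 'a. \<Sum>k\<in>{1..N}. piw \<theta> (fst x) k * pic \<theta> (fst x) k (snd x))"
  proof (intro continuous_on_sum continuous_on_mult)
    fix k assume k: "k \<in> {1..N}"
    show "continuous_on UNIV (\<lambda>x::'s \<times> 'a. piw \<theta> (fst x) k)"
      by (rule continuous_on_compose2[OF piw_cont2[OF k], of _ "\<lambda>x. (\<theta>, fst x)", simplified]) (auto intro!: continuous_intros)
    have "continuous_on UNIV (\<lambda>x::'s \<times> 'a. (\<lambda>(\<theta>, s, a). pic \<theta> s k a) (\<theta>, fst x, snd x))"
      by (rule continuous_on_compose2[OF C1_fun_cont[OF pic_C1[OF k]]]) (auto intro!: continuous_intros)
    then show "continuous_on UNIV (\<lambda>x::'s \<times> 'a. pic \<theta> (fst x) k (snd x))" by (simp add: case_prod_beta)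
  qed
  then show ?thesis by (simp add: mixture_policy_def)
qed

lemma Q_cont_sa: "continuous_on UNIV (\<lambda>x::'s \<times> 'a. Q (fst x) (snd x))"
proof -
  have "continuous_on UNIV (\<lambda>x::'s \<times> 'a. (\<lambda>(s, a). Q s a) x)"
    using C1_fun_cont[OF Q_C1] by simp
  then show ?thesis by (simp add: case_prod_beta)
qed

lemma sets_B_lborel: "sets (B \<Otimes>\<^sub>M (lborel::'b::euclidean_space measure)) = sets (borel :: ('s \<times> 'b) measure)"
proof -
  have "sets (B \<Otimes>\<^sub>M (lborel::'b measure)) = sets ((borel::'s measure) \<Otimes>\<^sub>M (borel::'b measure))"
    by (rule sets_pair_measure_cong[OF B_sets]) simp
  then show ?thesis by (metis borel_prod)
qed

lemma J_meas: "(\<lambda>s. Jint \<theta> s) \<in> borel_measurable B"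
proof -
  have m1: "(\<lambda>x::'s \<times> 'a. indicator A (snd x) *\<^sub>R (pim \<theta> (fst x) (snd x) * (Q (fst x) (snd x) - \<alpha> * ln (pim \<theta> (fst x) (snd x))))) \<in> borel_measurable borel"
  proof -
    have pm: "(\<lambda>x::'s \<times> 'a. pim \<theta> (fst x) (snd x)) \<in> borel_measurable borel"
      by (rule borel_measurable_continuous_onI[OF pim_cont_sa])
    have qm: "(\<lambda>x::'s \<times> 'a. Q (fst x) (snd x)) \<in> borel_measurable borel"
      by (rule borel_measurable_continuous_onI[OF Q_cont_sa])
    have im: "(\<lambda>x::'s \<times> 'a. indicator ((UNIV::'s set) \<times> A) x) \<in> borel_measurable borel"
      using A_compact by (intro borel_measurable_indicator borel_closed closed_Times) (auto intro: compact_imp_closed)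
    have "(\<lambda>x::'s \<times> 'a. indicator ((UNIV::'s set) \<times> A) x *\<^sub>R (pim \<theta> (fst x) (snd x) * (Q (fst x) (snd x) - \<alpha> * ln (pim \<theta> (fst x) (snd x))))) \<in> borel_measurable borel"
      by (intro borel_measurable_scaleR im borel_measurable_times pm borel_measurable_diff qm borel_measurable_const borel_measurable_ln)
    moreover have "indicator ((UNIV::'s set) \<times> A) x = (indicator A (snd x) :: real)" for x :: "'s \<times> 'a"
      by (cases x) (simp add: indicator_def)
    ultimately show ?thesis by simp
  qed
  have "(case_prod (\<lambda>s a. indicator A a *\<^sub>R (pim \<theta> s a * (Q s a - \<alpha> * ln (pim \<theta> s a))))) \<in> borel_measurable (B \<Otimes>\<^sub>M lborel)"
  proof -
    have eqf: "(case_prod (\<lambda>s a. indicator A a *\<^sub>R (pim \<theta> s a * (Q s a - \<alpha> * ln (pim \<theta> s a)))))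
      = (\<lambda>x::'s \<times> 'a. indicator A (snd x) *\<^sub>R (pim \<theta> (fst x) (snd x) * (Q (fst x) (snd x) - \<alpha> * ln (pim \<theta> (fst x) (snd x)))))"
      by (rule ext) (simp only: split_beta)
    show ?thesis unfolding eqf measurable_cong_sets[OF sets_B_lborel refl] by (rule m1)
  qed
  from lborel.borel_measurable_lebesgue_integral[OF this]
  show ?thesis by (simp add: Jint_def set_lebesgue_integral_def)
qed

lemma J_int: "integrable B (Jint \<theta>)"
proof -
  interpret prob_space B by (rule B_prob)
  have "compact ((\<lambda>s. \<Sum>k\<in>{1..N}. piw \<theta> s k * Gk k \<theta> s) ` S)"
    by (rule compact_continuous_image[OF Jsum_cont S_compact])
  then have "bounded ((\<lambda>s. \<Sum>k\<in>{1..N}. piw \<theta> s k * Gk k \<theta> s) ` S)" by (rule compact_imp_bounded)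
  then obtain M where M0: "\<forall>x\<in>(\<lambda>s. \<Sum>k\<in>{1..N}. piw \<theta> s k * Gk k \<theta> s) ` S. norm x \<le> M"
    unfolding bounded_iff by blast
  then have M: "\<And>s. s \<in> S \<Longrightarrow> norm (\<Sum>k\<in>{1..N}. piw \<theta> s k * Gk k \<theta> s) \<le> M" by blast
  show ?thesis
  proof (rule integrable_const_bound[where B=M])
    show "AE x in B. norm (Jint \<theta> x) \<le> M"
      using B_supp
    proof eventually_elim
      case (elim s)
      have "Jint \<theta> s = (\<Sum>k\<in>{1..N}. piw \<theta> s k * Gk k \<theta> s)" using Jint_eq[OF elim] unfolding Jint_def .
      then show ?case using M[OF elim] by (simp only:)
    qed
    show "Jint \<theta> \<in> borel_measurable B" using J_meas by simp
  qed
qed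

lemma DJ_int: "integrable B (\<lambda>s. indicator S s *\<^sub>R DJ \<theta> s)"
proof -
  interpret prob_space B by (rule B_prob)
  have cS: "continuous_on S (\<lambda>s. DJ \<theta> s)"
    by (rule continuous_on_compose2[OF DJ_cont, of _ "\<lambda>s. (\<theta>, s)", simplified]) (auto intro!: continuous_intros)
  have "compact ((\<lambda>s. DJ \<theta> s) ` S)"
    by (rule compact_continuous_image[OF cS S_compact])
  then have "bounded ((\<lambda>s. DJ \<theta> s) ` S)" by (rule compact_imp_bounded)
  then obtain M where M0: "\<forall>x\<in>(\<lambda>s. DJ \<theta> s) ` S. norm x \<le> M"
    unfolding bounded_iff by blast
  then have M: "\<And>s. s \<in> S \<Longrightarrow> norm (DJ \<theta> s) \<le> M" by blast
  have M0: "M \<ge> 0" using M S_ne norm_ge_zero order_trans by blast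
  show ?thesis
  proof (rule integrable_const_bound[where B=M])
    show "AE x in B. norm (indicator S x *\<^sub>R DJ \<theta> x) \<le> M"
      using M M0 by (intro AE_I2) (simp add: indicator_def)
    have "(\<lambda>s. indicator S s *\<^sub>R DJ \<theta> s) \<in> borel_measurable borel"
      using S_compact cS by (intro borel_measurable_continuous_on_indicator) (auto intro: borel_compact)
    then show "(\<lambda>s. indicator S s *\<^sub>R DJ \<theta> s) \<in> borel_measurable B"
      unfolding measurable_cong_sets[OF B_sets refl] .
  qed
qed

lemma main_deriv:
  "((\<lambda>\<theta>. LINT s|B. Jint \<theta> s) has_derivative (\<lambda>h. (LINT s|B. indicator S s *\<^sub>R DJ \<theta>0 s) \<bullet> h)) (at \<theta>0)"
proof (rule diff_under_integral[where g="\<lambda>_. 1"])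
  interpret prob_space B by (rule B_prob)
  show "integrable B (Jint \<theta>)" for \<theta> by (rule J_int)
  show "integrable B (\<lambda>s. indicator S s *\<^sub>R DJ \<theta>0 s)" by (rule DJ_int)
  show "integrable B (\<lambda>_. 1)" by simp
  show "AE x in B. \<forall>\<theta>. ((\<lambda>t. Jint t x) has_derivative (\<lambda>h. (indicator S x *\<^sub>R DJ \<theta> x) \<bullet> h)) (at \<theta>)"
    using B_supp
  proof eventually_elim
    case (elim s)
    show ?case
    proof (rule allI)
      fix \<theta>
      have "indicator S s *\<^sub>R DJ \<theta> s = DJ \<theta> s" using elim by simp
      then show "((\<lambda>t. Jint t s) has_derivative (\<lambda>h. (indicator S s *\<^sub>R DJ \<theta> s) \<bullet> h)) (at \<theta>)"
        using J_deriv[OF elim, of \<theta>] by (simp only:)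
    qed
  qed
  fix e :: real assume e: "e > 0"
  have K: "compact (cball \<theta>0 1 \<times> S)" using S_compact by (intro compact_Times) auto
  have "uniformly_continuous_on (cball \<theta>0 1 \<times> S) (\<lambda>y. DJ (fst y) (snd y))"
    using compact_uniformly_continuous[OF continuous_on_subset[OF DJ_cont] K] by auto
  then obtain d where d: "d > 0" and dd: "\<And>x x'. x \<in> cball \<theta>0 1 \<times> S \<Longrightarrow> x' \<in> cball \<theta>0 1 \<times> S \<Longrightarrow> dist x' x < d \<Longrightarrow> dist (DJ (fst x') (snd x')) (DJ (fst x) (snd x)) < e"
    unfolding uniformly_continuous_on_def using e by metis
  show "\<exists>d>0. AE x in B. \<forall>\<theta>. dist \<theta> \<theta>0 < d \<longrightarrow> norm (indicator S x *\<^sub>R DJ \<theta> x - indicator S x *\<^sub>R DJ \<theta>0 x) \<le> e * 1"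
  proof (intro exI[of _ "min d 1"] conjI AE_I2 allI impI)
    show "min d 1 > 0" using d by auto
    fix x \<theta> assume th: "dist \<theta> \<theta>0 < min d 1"
    show "norm (indicator S x *\<^sub>R DJ \<theta> x - indicator S x *\<^sub>R DJ \<theta>0 x) \<le> e * 1"
    proof (cases "x \<in> S")
      case True
      have "dist (DJ \<theta> x) (DJ \<theta>0 x) < e"
        using dd[of "(\<theta>0, x)" "(\<theta>, x)"] True th by (auto simp: dist_Pair_Pair dist_commute)
      then show ?thesis using True by (simp add: dist_norm)
    next
      case False
      then show ?thesis using e by simp
    qed
  qed
qed

end

context propC5_ctx
begin

lemma gl_eq: assumes s: "s \<in> S" and k: "k \<in> {1..N}"
  shows "grad (\<lambda>t. ln (piw t s k)) \<theta> = (1 / piw \<theta> s k) *\<^sub>R DW k (\<theta>, s)"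
proof (rule grad_eq)
  have pos: "piw \<theta> s k \<noteq> 0" using piw_pos[OF s k, of \<theta>] by linarith
  have "(ln has_derivative (\<lambda>h. inverse (piw \<theta> s k) * h)) (at (piw \<theta> s k))"
    using ln_deriv_nz[OF pos] by (simp add: has_field_derivative_def)
  from diff_chain_at[OF DW(2)[OF k] this]
  have "((\<lambda>t. ln (piw t s k)) has_derivative (\<lambda>h. inverse (piw \<theta> s k) * (DW k (\<theta>, s) \<bullet> h))) (at \<theta>)"
    by (simp add: o_def)
  moreover have "(\<lambda>h. inverse (piw \<theta> s k) * (DW k (\<theta>, s) \<bullet> h)) = (\<lambda>h. ((1 / piw \<theta> s k) *\<^sub>R DW k (\<theta>, s)) \<bullet> h)"
    by (simp add: fun_eq_iff divide_inverse)
  ultimately show "((\<lambda>t. ln (piw t s k)) has_derivative (\<lambda>h. ((1 / piw \<theta> s k) *\<^sub>R DW k (\<theta>, s)) \<bullet> h)) (at \<theta>)"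
    by simp
qed

lemma Phi_eq: "Phi k (t, s, \<epsilon>) = Q s (f t s k \<epsilon>) - \<alpha> * ln (pim t s (f t s k \<epsilon>))"
  by (simp add: Phi_def Ax_def Gx_def fx_def)

lemma gH_eq: assumes s: "s \<in> S" and e: "\<epsilon> \<in> E" and k: "k \<in> {1..N}"
  shows "grad (\<lambda>t. Q s (f t s k \<epsilon>) - \<alpha> * ln (pim t s (f t s k \<epsilon>))) \<theta> = DPhi k (\<theta>, s, \<epsilon>)"
proof (rule grad_eq)
  have "(\<theta>, s, \<epsilon>) \<in> Uk k" using SE_Uk[OF k] s e by auto
  from DPhi(2)[OF k this]
  show "((\<lambda>t. Q s (f t s k \<epsilon>) - \<alpha> * ln (pim t s (f t s k \<epsilon>))) has_derivative (\<lambda>h. DPhi k (\<theta>, s, \<epsilon>) \<bullet> h)) (at \<theta>)"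
    by (simp only: Phi_eq)
qed

definition "Rint \<theta> s = (\<Sum>k=1..N. piw \<theta> s k *\<^sub>R
        (LINT \<epsilon>:E|lborel. p \<epsilon> *\<^sub>R
          ((Q s (f \<theta> s k \<epsilon>) - \<alpha> * ln (pim \<theta> s (f \<theta> s k \<epsilon>)))
              *\<^sub>R grad (\<lambda>t. ln (piw t s k)) \<theta>
           + grad (\<lambda>t. Q s (f t s k \<epsilon>) - \<alpha> * ln (pim t s (f t s k \<epsilon>))) \<theta>)))"

lemma Rint_eq: assumes s: "s \<in> S"
  shows "Rint \<theta> s = DJ \<theta> s"
  unfolding Rint_def DJ_def
proof (rule sum.cong[OF refl])
  fix k assume k: "k \<in> {1..N}"
  define gl where "gl = grad (\<lambda>t. ln (piw t s k)) \<theta>"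
  have cP: "continuous_on E (\<lambda>\<epsilon>. Phi k (\<theta>, s, \<epsilon>))"
    by (rule continuous_on_compose2[OF Phi_cont[OF k]]) (use s in \<open>auto intro!: continuous_intros\<close>)
  have cD: "continuous_on E (\<lambda>\<epsilon>. DPhi k (\<theta>, s, \<epsilon>))"
    by (rule continuous_on_compose2[OF DPhi_cont[OF k]]) (use s in \<open>auto intro!: continuous_intros\<close>)
  have pE: "continuous_on E p" using continuous_on_subset[OF p_cont] by blast
  have i1: "integrable lborel (\<lambda>\<epsilon>. indicator E \<epsilon> *\<^sub>R (p \<epsilon> *\<^sub>R Phi k (\<theta>, s, \<epsilon>)))"
  proof -
    have "continuous_on E (\<lambda>\<epsilon>. p \<epsilon> *\<^sub>R Phi k (\<theta>, s, \<epsilon>))" using cP pE by (intro continuous_intros)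
    from borel_integrable_compact[OF E_compact this] show ?thesis .
  qed
  have i2: "integrable lborel (\<lambda>\<epsilon>. indicator E \<epsilon> *\<^sub>R (p \<epsilon> *\<^sub>R DPhi k (\<theta>, s, \<epsilon>)))"
  proof -
    have "continuous_on E (\<lambda>\<epsilon>. p \<epsilon> *\<^sub>R DPhi k (\<theta>, s, \<epsilon>))" using cD pE by (intro continuous_intros)
    from borel_integrable_compact[OF E_compact this] show ?thesis .
  qed
  have "(LINT \<epsilon>:E|lborel. p \<epsilon> *\<^sub>R
          ((Q s (f \<theta> s k \<epsilon>) - \<alpha> * ln (pim \<theta> s (f \<theta> s k \<epsilon>))) *\<^sub>R gl
           + grad (\<lambda>t. Q s (f t s k \<epsilon>) - \<alpha> * ln (pim t s (f t s k \<epsilon>))) \<theta>))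
      = (LINT \<epsilon>|lborel. (indicator E \<epsilon> *\<^sub>R (p \<epsilon> *\<^sub>R Phi k (\<theta>, s, \<epsilon>))) *\<^sub>R gl + indicator E \<epsilon> *\<^sub>R (p \<epsilon> *\<^sub>R DPhi k (\<theta>, s, \<epsilon>)))"
    unfolding set_lebesgue_integral_def
  proof (rule Bochner_Integration.integral_cong[OF refl])
    fix \<epsilon>
    show "indicator E \<epsilon> *\<^sub>R (p \<epsilon> *\<^sub>R ((Q s (f \<theta> s k \<epsilon>) - \<alpha> * ln (pim \<theta> s (f \<theta> s k \<epsilon>))) *\<^sub>R gl
           + grad (\<lambda>t. Q s (f t s k \<epsilon>) - \<alpha> * ln (pim t s (f t s k \<epsilon>))) \<theta>))
      = (indicator E \<epsilon> *\<^sub>R (p \<epsilon> *\<^sub>R Phi k (\<theta>, s, \<epsilon>))) *\<^sub>R gl + indicator E \<epsilon> *\<^sub>R (p \<epsilon> *\<^sub>R DPhi k (\<theta>, s, \<epsilon>))"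
    proof (cases "\<epsilon> \<in> E")
      case True
      show ?thesis using True gH_eq[OF s True k, of \<theta>] by (simp add: Phi_eq scaleR_add_right)
    next
      case False
      then show ?thesis by simp
    qed
  qed
  also have "\<dots> = Gk k \<theta> s *\<^sub>R gl + DGk k \<theta> s"
    unfolding Gk_def DGk_def using i1 i2 by simp
  finally have eq: "(LINT \<epsilon>:E|lborel. p \<epsilon> *\<^sub>R
          ((Q s (f \<theta> s k \<epsilon>) - \<alpha> * ln (pim \<theta> s (f \<theta> s k \<epsilon>))) *\<^sub>R gl
           + grad (\<lambda>t. Q s (f t s k \<epsilon>) - \<alpha> * ln (pim t s (f t s k \<epsilon>))) \<theta>)) = Gk k \<theta> s *\<^sub>R gl + DGk k \<theta> s" .
  have pos: "piw \<theta> s k \<noteq> 0" using piw_pos[OF s k, of \<theta>] by linarith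
  show "piw \<theta> s k *\<^sub>R
        (LINT \<epsilon>:E|lborel. p \<epsilon> *\<^sub>R
          ((Q s (f \<theta> s k \<epsilon>) - \<alpha> * ln (pim \<theta> s (f \<theta> s k \<epsilon>))) *\<^sub>R grad (\<lambda>t. ln (piw t s k)) \<theta>
           + grad (\<lambda>t. Q s (f t s k \<epsilon>) - \<alpha> * ln (pim t s (f t s k \<epsilon>))) \<theta>))
      = Gk k \<theta> s *\<^sub>R DW k (\<theta>, s) + piw \<theta> s k *\<^sub>R DGk k \<theta> s"
    using eq pos unfolding gl_def gl_eq[OF s k] by (simp add: scaleR_add_right)
qed

end

context propC5_ctx
begin

lemma gl_meas: assumes k: "k \<in> {1..N}"
  shows "(\<lambda>s. grad (\<lambda>t. ln (piw t s k)) \<theta>) \<in> borel_measurable borel"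
proof -
  have "(\<lambda>y. grad (\<lambda>t. (\<lambda>x. 0::real) (t, y) - (-1) * ln ((\<lambda>x. piw (fst x) (snd x) k) (t, y))) \<theta>) \<in> borel_measurable borel"
    by (rule grad_ln_measurable[OF C1_on_const C1_piw2[OF k]]) simp
  then show ?thesis by simp
qed

lemma gH_meas: assumes k: "k \<in> {1..N}"
  shows "(\<lambda>y::'s \<times> 'e. grad (\<lambda>t. Q (fst y) (f t (fst y) k (snd y)) - \<alpha> * ln (pim t (fst y) (f t (fst y) k (snd y)))) \<theta>) \<in> borel_measurable borel"
proof -
  have "(\<lambda>y::'s \<times> 'e. grad (\<lambda>t. Ax k (t, y) - \<alpha> * ln (Gx k (t, y))) \<theta>) \<in> borel_measurable borel"
    by (rule grad_ln_measurable[OF C1_Ax[OF k] C1_Gx[OF k]]) (use alpha_pos in simp)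
  then show ?thesis by (simp add: Ax_def Gx_def fx_def)
qed

lemma H_meas: assumes k: "k \<in> {1..N}"
  shows "(\<lambda>y::'s \<times> 'e. Q (fst y) (f \<theta> (fst y) k (snd y)) - \<alpha> * ln (pim \<theta> (fst y) (f \<theta> (fst y) k (snd y)))) \<in> borel_measurable borel"
proof -
  have a: "(\<lambda>y::'s \<times> 'e. Ax k (\<theta>, y)) \<in> borel_measurable borel"
    by (intro borel_measurable_continuous_onI continuous_on_compose2[OF C1_on_cont[OF C1_Ax[OF k]]]) (auto intro!: continuous_intros)
  have g: "(\<lambda>y::'s \<times> 'e. Gx k (\<theta>, y)) \<in> borel_measurable borel"
    by (intro borel_measurable_continuous_onI continuous_on_compose2[OF C1_on_cont[OF C1_Gx[OF k]]]) (auto intro!: continuous_intros)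
  have "(\<lambda>y::'s \<times> 'e. Ax k (\<theta>, y) - \<alpha> * ln (Gx k (\<theta>, y))) \<in> borel_measurable borel"
    by (intro borel_measurable_diff a borel_measurable_times borel_measurable_const borel_measurable_ln g)
  then show ?thesis by (simp add: Ax_def Gx_def fx_def)
qed

lemma inner_meas: assumes k: "k \<in> {1..N}"
  shows "(\<lambda>s. LINT \<epsilon>:E|lborel. p \<epsilon> *\<^sub>R
          ((Q s (f \<theta> s k \<epsilon>) - \<alpha> * ln (pim \<theta> s (f \<theta> s k \<epsilon>)))
              *\<^sub>R grad (\<lambda>t. ln (piw t s k)) \<theta>
           + grad (\<lambda>t. Q s (f t s k \<epsilon>) - \<alpha> * ln (pim t s (f t s k \<epsilon>))) \<theta>)) \<in> borel_measurable borel"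
proof -
  have fst_m: "(\<lambda>x::'s \<times> 'e. fst x) \<in> borel_measurable borel"
    by (intro borel_measurable_continuous_onI continuous_intros)
  have snd_m: "(\<lambda>x::'s \<times> 'e. snd x) \<in> borel_measurable borel"
    by (intro borel_measurable_continuous_onI continuous_intros)
  have im: "(\<lambda>x::'s \<times> 'e. indicator E (snd x) :: real) \<in> borel_measurable borel"
    using measurable_compose[OF snd_m borel_measurable_indicator[OF E_borel]] by simp
  have pm: "(\<lambda>x::'s \<times> 'e. p (snd x)) \<in> borel_measurable borel"
    using measurable_compose[OF snd_m borel_measurable_continuous_onI[OF p_cont]] by simp
  have glm: "(\<lambda>x::'s \<times> 'e. grad (\<lambda>t. ln (piw t (fst x) k)) \<theta>) \<in> borel_measurable borel"
    using measurable_compose[OF fst_m gl_meas[OF k]] by simp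
  have m: "(\<lambda>x::'s \<times> 'e. indicator E (snd x) *\<^sub>R (p (snd x) *\<^sub>R
          ((Q (fst x) (f \<theta> (fst x) k (snd x)) - \<alpha> * ln (pim \<theta> (fst x) (f \<theta> (fst x) k (snd x))))
              *\<^sub>R grad (\<lambda>t. ln (piw t (fst x) k)) \<theta>
           + grad (\<lambda>t. Q (fst x) (f t (fst x) k (snd x)) - \<alpha> * ln (pim t (fst x) (f t (fst x) k (snd x)))) \<theta>)))
      \<in> borel_measurable borel"
    by (intro borel_measurable_scaleR im pm borel_measurable_add H_meas[OF k] glm gH_meas[OF k])
  have sets_eq: "sets ((borel::'s measure) \<Otimes>\<^sub>M (lborel::'e measure)) = sets (borel :: ('s \<times> 'e) measure)"
  proof -
    have "sets ((borel::'s measure) \<Otimes>\<^sub>M (lborel::'e measure)) = sets ((borel::'s measure) \<Otimes>\<^sub>M (borel::'e measure))"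
      by (rule sets_pair_measure_cong) simp_all
    then show ?thesis by (metis borel_prod)
  qed
  define F where "F s \<epsilon> = indicator E \<epsilon> *\<^sub>R (p \<epsilon> *\<^sub>R
          ((Q s (f \<theta> s k \<epsilon>) - \<alpha> * ln (pim \<theta> s (f \<theta> s k \<epsilon>)))
              *\<^sub>R grad (\<lambda>t. ln (piw t s k)) \<theta>
           + grad (\<lambda>t. Q s (f t s k \<epsilon>) - \<alpha> * ln (pim t s (f t s k \<epsilon>))) \<theta>))" for s \<epsilon>
  have eqf: "case_prod F = (\<lambda>x::'s \<times> 'e. indicator E (snd x) *\<^sub>R (p (snd x) *\<^sub>R
          ((Q (fst x) (f \<theta> (fst x) k (snd x)) - \<alpha> * ln (pim \<theta> (fst x) (f \<theta> (fst x) k (snd x))))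
              *\<^sub>R grad (\<lambda>t. ln (piw t (fst x) k)) \<theta>
           + grad (\<lambda>t. Q (fst x) (f t (fst x) k (snd x)) - \<alpha> * ln (pim t (fst x) (f t (fst x) k (snd x)))) \<theta>)))"
    by (rule ext) (simp only: split_beta F_def)
  have "case_prod F \<in> borel_measurable ((borel::'s measure) \<Otimes>\<^sub>M lborel)"
    unfolding eqf measurable_cong_sets[OF sets_eq refl] by (rule m)
  from lborel.borel_measurable_lebesgue_integral[OF this]
  show ?thesis unfolding set_lebesgue_integral_def F_def .
qed

lemma Rint_meas: "(\<lambda>s. Rint \<theta> s) \<in> borel_measurable B"
proof -
  have "(\<lambda>s. Rint \<theta> s) \<in> borel_measurable borel"
    unfolding Rint_def
  proof (intro borel_measurable_sum borel_measurable_scaleR inner_meas)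
    fix k assume k: "k \<in> {1..N}"
    show "(\<lambda>s. piw \<theta> s k) \<in> borel_measurable borel"
      by (intro borel_measurable_continuous_onI continuous_on_compose2[OF piw_cont2[OF k], of _ "\<lambda>s. (\<theta>, s)", simplified])
         (auto intro!: continuous_intros)
  qed
  then show ?thesis unfolding measurable_cong_sets[OF B_sets refl] .
qed

lemma final_eq: "(LINT s|B. Rint \<theta> s) = (LINT s|B. indicator S s *\<^sub>R DJ \<theta> s)"
proof (rule integral_cong_AE)
  show "(\<lambda>s. Rint \<theta> s) \<in> borel_measurable B" by (rule Rint_meas)
  show "(\<lambda>s. indicator S s *\<^sub>R DJ \<theta> s) \<in> borel_measurable B"
    by (rule borel_measurable_integrable[OF DJ_int])
  show "AE s in B. Rint \<theta> s = indicator S s *\<^sub>R DJ \<theta> s"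
    using B_supp
  proof eventually_elim
    case (elim s)
    then show ?case using Rint_eq[OF elim] by simp
  qed
qed

end

theorem propositionC5:
  fixes S :: "'s::euclidean_space set" and A :: "'a::euclidean_space set"
    and E :: "'e::euclidean_space set"
    and N :: nat
    and piw :: "'p::euclidean_space \<Rightarrow> 's \<Rightarrow> nat \<Rightarrow> real"
    and pic :: "'p \<Rightarrow> 's \<Rightarrow> nat \<Rightarrow> 'a \<Rightarrow> real"
    and f :: "'p \<Rightarrow> 's \<Rightarrow> nat \<Rightarrow> 'e \<Rightarrow> 'a"
    and finv :: "'p \<Rightarrow> 's \<Rightarrow> nat \<Rightarrow> 'a \<Rightarrow> 'e"
    and p :: "'e \<Rightarrow> real"
    and P :: "'s \<Rightarrow> 'a \<Rightarrow> 's \<Rightarrow> real" and d0 :: "'s \<Rightarrow> real" and r :: "'s \<Rightarrow> 'a \<Rightarrow> real"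
    and Q :: "'s \<Rightarrow> 'a \<Rightarrow> real"
    and B :: "'s measure"
    and \<alpha> :: real
  assumes S_compact: "compact S" and A_compact: "compact A"
    and N_pos: "N \<ge> 1"
    and alpha_pos: "\<alpha> > 0"
    and B_prob: "prob_space B" and B_sets: "sets B = sets borel" and B_supp: "AE s in B. s \<in> S"
    \<comment> \<open>pi^w(.|s) is a (positive) distribution on {1..N}\<close>
    and piw_pos: "\<And>\<theta> s k. s \<in> S \<Longrightarrow> k \<in> {1..N} \<Longrightarrow> piw \<theta> s k > 0"
    and piw_sum: "\<And>\<theta> s. s \<in> S \<Longrightarrow> (\<Sum>k=1..N. piw \<theta> s k) = 1"
    \<comment> \<open>component densities on A are positive\<close>
    and pic_pos: "\<And>\<theta> s k a. s \<in> S \<Longrightarrow> k \<in> {1..N} \<Longrightarrow> a \<in> A \<Longrightarrow> pic \<theta> s k a > 0"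
    \<comment> \<open>noise epsilon has density p on E\<close>
    and p_nonneg: "\<And>\<epsilon>. \<epsilon> \<in> E \<Longrightarrow> p \<epsilon> \<ge> 0"
    and p_prob: "(\<integral>\<^sup>+\<epsilon>. ennreal (indicator E \<epsilon> * p \<epsilon>) \<partial>lborel) = 1"
    \<comment> \<open>reparameterization: f(epsilon;s,k) ~ pi^c(.|s,k) for epsilon ~ p\<close>
    and reparam: "\<And>\<theta> s k X. s \<in> S \<Longrightarrow> k \<in> {1..N} \<Longrightarrow> X \<in> sets borel \<Longrightarrow>
        (\<integral>\<^sup>+\<epsilon>. ennreal (indicator E \<epsilon> * p \<epsilon>) * indicator X (f \<theta> s k \<epsilon>) \<partial>lborel)
      = (\<integral>\<^sup>+a. ennreal (indicator A a * pic \<theta> s k a) * indicator X a \<partial>lborel)"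
    \<comment> \<open>f(.;s,k) is invertible with inverse finv(.;s,k)\<close>
    and f_bij: "\<And>\<theta> s k. s \<in> S \<Longrightarrow> k \<in> {1..N} \<Longrightarrow> bij_betw (f \<theta> s k) E A"
    and finv_f: "\<And>\<theta> s k \<epsilon>. s \<in> S \<Longrightarrow> k \<in> {1..N} \<Longrightarrow> \<epsilon> \<in> E \<Longrightarrow> finv \<theta> s k (f \<theta> s k \<epsilon>) = \<epsilon>"
    and f_finv: "\<And>\<theta> s k a. s \<in> S \<Longrightarrow> k \<in> {1..N} \<Longrightarrow> a \<in> A \<Longrightarrow> f \<theta> s k (finv \<theta> s k a) = a"
    \<comment> \<open>regularity: all functions continuously differentiable\<close>
    and P_C1: "C1_fun (\<lambda>(s, a, s'). P s a s')"
    and d0_C1: "C1_fun d0"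
    and r_C1: "C1_fun (\<lambda>(s, a). r s a)"
    and f_C1: "\<And>k. k \<in> {1..N} \<Longrightarrow> C1_fun (\<lambda>(\<theta>, s, \<epsilon>). f \<theta> s k \<epsilon>)"
    and finv_C1: "\<And>k. k \<in> {1..N} \<Longrightarrow> C1_fun (\<lambda>(\<theta>, s, a). finv \<theta> s k a)"
    and piw_C1: "\<And>k. k \<in> {1..N} \<Longrightarrow> C1_fun (\<lambda>(\<theta>, s). piw \<theta> s k)"
    and pic_C1: "\<And>k. k \<in> {1..N} \<Longrightarrow> C1_fun (\<lambda>(\<theta>, s, a). pic \<theta> s k a)"
    and p_C1: "C1_fun p"
    and Q_C1: "C1_fun (\<lambda>(s, a). Q s a)"
  shows "\<forall>\<theta>. has_gradient_at (Jhat B A Q \<alpha> (mixture_policy N piw pic))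
     (LINT s|B. (\<Sum>k=1..N. piw \<theta> s k *\<^sub>R
        (LINT \<epsilon>:E|lborel. p \<epsilon> *\<^sub>R
          ((Q s (f \<theta> s k \<epsilon>) - \<alpha> * ln (mixture_policy N piw pic \<theta> s (f \<theta> s k \<epsilon>)))
              *\<^sub>R grad (\<lambda>t. ln (piw t s k)) \<theta>
           + grad (\<lambda>t. Q s (f t s k \<epsilon>) - \<alpha> * ln (mixture_policy N piw pic t s (f t s k \<epsilon>))) \<theta>))))
     \<theta>"
proof -
  interpret propC5_ctx S A E N piw pic f finv p P d0 r Q B \<alpha>
    by (rule propC5_ctx.intro[OF assms])
  show ?thesis
  proof
    fix \<theta>
    have J: "Jhat B A Q \<alpha> (mixture_policy N piw pic) = (\<lambda>\<theta>. LINT s|B. Jint \<theta> s)"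
      by (simp add: fun_eq_iff Jhat_def Jint_def)
    show "has_gradient_at (Jhat B A Q \<alpha> (mixture_policy N piw pic))
     (LINT s|B. (\<Sum>k=1..N. piw \<theta> s k *\<^sub>R
        (LINT \<epsilon>:E|lborel. p \<epsilon> *\<^sub>R
          ((Q s (f \<theta> s k \<epsilon>) - \<alpha> * ln (mixture_policy N piw pic \<theta> s (f \<theta> s k \<epsilon>)))
              *\<^sub>R grad (\<lambda>t. ln (piw t s k)) \<theta>
           + grad (\<lambda>t. Q s (f t s k \<epsilon>) - \<alpha> * ln (mixture_policy N piw pic t s (f t s k \<epsilon>))) \<theta>))))
     \<theta>"
      unfolding has_gradient_at_def J using main_deriv[of \<theta>] final_eq[of \<theta>] unfolding Rint_def by simp
  qed
qed

end
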